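(* Suppose $\rho>1$ satisfies $|\lambda|<\rho<\lambda_0$ for every non-dominant eigenvalue $\lambda$ of $T$. Then there is an integer $K$ such that for every $k\ge K$ and every pair of admissible $(k+1)$-words $w_1,w_2$, the Perron–Frobenius eigenvalue $\lambda_1$ of $T_k\langle\{w_1,w_2\}\rangle$ satisfies $\lambda_1\ge\rho$.
   Context: Let $\mathcal{A}$ be a finite alphabet of $r$ symbols and $T=(T_{x,y})$ an irreducible $r\times r$ matrix with entries in $\{0,1\}$ (the directed graph on $\mathcal{A}$ with an edge $x\to y$ iff $T_{y,x}=1$ is strongly connected). Its Perron–Frobenius eigenvalue $\lambda_0$ is its spectral radius; the dominant eigenvalues of $T$ are those of modulus $\lambda_0$, and the other eigenvalues are called non-dominant. An admissible $k$-word is a string $a_1\cdots a_k$ with $T_{a_{i+1},a_i}=1$ for all $i$. $V_k$ is the complex vector space with basis $\{[w]\}$ indexed by admissible $k$-words; $T_k:V_k\to V_k$ is linear with $T_k([a_1\cdots a_k])=\sum[a_2\cdots a_kx]$ over symbols $x$ with $a_2\cdots a_kx$ admissible. For a word $w$, $\beta w$, $\eta w$ are obtained by deleting the last, resp. first, symbol. For an admissible $(k+1)$-word $w$, $E_w:V_k\to V_k$ is linear with $E_w[\beta w]=[\eta w]$ and $E_w[u]=0$ for all other admissible $k$-words $u$. For a set $\mathcal{C}$ of admissible $(k+1)$-words, $T_k\langle\mathcal{C}\rangle=T_k-\sum_{w\in\mathcal{C}}E_w$; its matrix in the word basis is a non-negative $0/1$ matrix, and its Perron–Frobenius eigenvalue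 is its spectral radius, which is an eigenvalue. *)

theory Defs
  imports Complex_Main
begin

text \<open>Square matrices indexed by a finite carrier set S are represented as functions
  M :: 'b \<Rightarrow> 'b \<Rightarrow> real, with M x y the entry in row x, column y;
  the matrix acts on column vectors by (M v) x = sum over y in S of M x y * v y.\<close>

definition is_eigenvalue :: "'b set \<Rightarrow> ('b \<Rightarrow> 'b \<Rightarrow> real) \<Rightarrow> complex \<Rightarrow> bool" where
  "is_eigenvalue S M lam \<longleftrightarrow>
     (\<exists>v :: 'b \<Rightarrow> complex. (\<exists>x\<in>S. v x \<noteq> 0) \<and>
        (\<forall>x\<in>S. (\<Sum>y\<in>S. complex_of_real (M x y) * v y) = lam * v x))"

definition spectral_radius :: "'b set \<Rightarrow> ('b \<Rightarrow> 'b \<Rightarrow> real) \<Rightarrow> real" where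
  "spectral_radius S M = Max (cmod ` {lam. is_eigenvalue S M lam})"

text \<open>For non-negative matrices the Perron--Frobenius eigenvalue is the spectral radius.\<close>
definition pf_eigenvalue :: "'b set \<Rightarrow> ('b \<Rightarrow> 'b \<Rightarrow> real) \<Rightarrow> real" where
  "pf_eigenvalue S M = spectral_radius S M"

definition irreducible01 :: "('a \<Rightarrow> 'a \<Rightarrow> real) \<Rightarrow> bool" where
  "irreducible01 T \<longleftrightarrow> (\<forall>x y. (x, y) \<in> {(a, b). T b a = 1}\<^sup>*)"

definition admissible :: "('a \<Rightarrow> 'a \<Rightarrow> real) \<Rightarrow> 'a list \<Rightarrow> bool" where
  "admissible T w \<longleftrightarrow> (\<forall>i. Suc i < length w \<longrightarrow> T (w ! Suc i) (w ! i) = 1)"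

definition adm_words :: "('a \<Rightarrow> 'a \<Rightarrow> real) \<Rightarrow> nat \<Rightarrow> 'a list set" where
  "adm_words T k = {w. length w = k \<and> admissible T w}"

text \<open>Matrix of T_k in the word basis: T_k [w] = sum of [tl w @ [x]] over admissible
  such words, so the entry in row u, column w is 1 iff u = tl w @ [x] for some x.\<close>
definition Tk :: "('a \<Rightarrow> 'a \<Rightarrow> real) \<Rightarrow> nat \<Rightarrow> 'a list \<Rightarrow> 'a list \<Rightarrow> real" where
  "Tk T k u w = (if u \<in> adm_words T k \<and> w \<in> adm_words T k \<and> length u = k \<and> k \<ge> 1
                    \<and> butlast u = tl w then 1 else 0)"

text \<open>E_w for a (k+1)-word w: maps [beta w] = [butlast w] to [eta w] = [tl w], all other
  basis vectors to 0.\<close>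
definition Ew :: "'a list \<Rightarrow> 'a list \<Rightarrow> 'a list \<Rightarrow> real" where
  "Ew w u v = (if u = tl w \<and> v = butlast w then 1 else 0)"

definition Tk_del :: "('a \<Rightarrow> 'a \<Rightarrow> real) \<Rightarrow> nat \<Rightarrow> 'a list set \<Rightarrow> 'a list \<Rightarrow> 'a list \<Rightarrow> real" where
  "Tk_del T k C u v = Tk T k u v - (\<Sum>w\<in>C. Ew w u v)"

end

theory Submission
  imports Defs Jordan_Normal_Form.Jordan_Normal_Form_Existence "HOL-Library.Sublist"
begin

fun mpow :: "'b set \<Rightarrow> ('b \<Rightarrow> 'b \<Rightarrow> real) \<Rightarrow> nat \<Rightarrow> 'b \<Rightarrow> 'b \<Rightarrow> real" where
  "mpow S M 0 x y = (if x = y then 1 else 0)"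
| "mpow S M (Suc n) x y = (\<Sum>z\<in>S. mpow S M n x z * M z y)"

definition jmat :: "nat \<Rightarrow> (nat \<Rightarrow> 'b) \<Rightarrow> ('b \<Rightarrow> 'b \<Rightarrow> real) \<Rightarrow> complex mat" where
  "jmat n f M = mat n n (\<lambda>(i,j). complex_of_real (M (f i) (f j)))"

lemma jmat_carrier: "jmat n f M \<in> carrier_mat n n"
  by (simp add: jmat_def)

lemma sum_bij_reindex:
  assumes f: "bij_betw f {0..<n} S"
  shows "(\<Sum>i\<in>{0..<n}. g (f i)) = (\<Sum>y\<in>S. g y)"
  using sum.reindex_bij_betw[OF f, of g] by simp

lemma jmat_pow:
  assumes f: "bij_betw f {0..<n} S" and i: "i < n" and j: "j < n"
  shows "(jmat n f M ^\<^sub>m k) $$ (i,j) = complex_of_real (mpow S M k (f i) (f j))"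
  using i j
proof (induction k arbitrary: j)
  case 0
  have "f i = f j \<longleftrightarrow> i = j" using f 0 by (auto simp: bij_betw_def inj_on_def)
  then show ?case using 0 by (simp add: jmat_def)
next
  case (Suc k)
  have "(jmat n f M ^\<^sub>m Suc k) $$ (i,j) = row (jmat n f M ^\<^sub>m k) i \<bullet> col (jmat n f M) j"
    using Suc.prems by (simp add: jmat_def)
  also have "\<dots> = (\<Sum>l\<in>{0..<n}. complex_of_real (mpow S M k (f i) (f l) * M (f l) (f j)))"
    unfolding scalar_prod_def using Suc by (auto simp: jmat_def intro!: sum.cong)
  also have "\<dots> = (\<Sum>z\<in>S. complex_of_real (mpow S M k (f i) z * M z (f j)))"
    by (rule sum_bij_reindex[OF f, where g = "\<lambda>z. complex_of_real (mpow S M k (f i) z * M z (f j))"])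
  also have "\<dots> = complex_of_real (mpow S M (Suc k) (f i) (f j))" by simp
  finally show ?case .
qed

lemma jmat_eig_to:
  assumes f: "bij_betw f {0..<n} S" and ev: "is_eigenvalue S M lam"
  shows "eigenvalue (jmat n f M) lam"
proof -
  obtain v where v: "\<exists>x\<in>S. v x \<noteq> 0" and e: "\<forall>x\<in>S. (\<Sum>y\<in>S. complex_of_real (M x y) * v y) = lam * v x"
    using ev unfolding is_eigenvalue_def by blast
  define v' where "v' = vec n (\<lambda>i. v (f i))"
  obtain x where x: "x \<in> S" "v x \<noteq> 0" using v by blast
  obtain i where i: "i < n" "f i = x" using f x by (auto simp: bij_betw_def)
  have ne: "v' \<noteq> 0\<^sub>v n"
  proof
    assume "v' = 0\<^sub>v n"
    then have "v' $ i = 0" using i by simp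
    then show False using i x by (simp add: v'_def)
  qed
  have "jmat n f M *\<^sub>v v' = lam \<cdot>\<^sub>v v'"
  proof (rule eq_vecI)
    fix l assume l: "l < dim_vec (lam \<cdot>\<^sub>v v')"
    then have l': "l < n" by (simp add: v'_def)
    have "(jmat n f M *\<^sub>v v') $ l = (\<Sum>m\<in>{0..<n}. complex_of_real (M (f l) (f m)) * v (f m))"
      using l' by (auto simp: jmat_def v'_def scalar_prod_def intro!: sum.cong)
    also have "\<dots> = (\<Sum>y\<in>S. complex_of_real (M (f l) y) * v y)"
      by (rule sum_bij_reindex[OF f, where g = "\<lambda>y. complex_of_real (M (f l) y) * v y"])
    also have "\<dots> = lam * v (f l)" using e f l' by (auto simp: bij_betw_def)
    finally show "(jmat n f M *\<^sub>v v') $ l = (lam \<cdot>\<^sub>v v') $ l" using l' by (simp add: v'_def)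
  qed (simp add: jmat_def v'_def)
  then show ?thesis unfolding eigenvalue_def eigenvector_def using ne
    by (intro exI[of _ v']) (simp add: jmat_def v'_def)
qed

lemma jmat_eig_from:
  assumes f: "bij_betw f {0..<n} S" and ev: "eigenvalue (jmat n f M) lam"
  shows "is_eigenvalue S M lam"
proof -
  obtain v' where v': "v' \<in> carrier_vec n" "v' \<noteq> 0\<^sub>v n" "jmat n f M *\<^sub>v v' = lam \<cdot>\<^sub>v v'"
    using ev unfolding eigenvalue_def eigenvector_def by (auto simp: jmat_def)
  define g where "g = inv_into {0..<n} f"
  have gf: "\<And>i. i < n \<Longrightarrow> g (f i) = i" using f unfolding g_def bij_betw_def
    by (simp add: inv_into_f_f)
  have fg: "\<And>x. x \<in> S \<Longrightarrow> f (g x) = x \<and> g x < n" using f unfolding g_def bij_betw_def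
    by (metis atLeastLessThan_iff f_inv_into_f inv_into_into)
  define v where "v = (\<lambda>x. v' $ (g x))"
  obtain i where i: "i < n" "v' $ i \<noteq> 0" using v' by (metis carrier_vecD eq_vecI index_zero_vec)
  have "f i \<in> S" using f i by (auto simp: bij_betw_def)
  moreover have "v (f i) \<noteq> 0" using i gf by (simp add: v_def)
  moreover have "\<forall>x\<in>S. (\<Sum>y\<in>S. complex_of_real (M x y) * v y) = lam * v x"
  proof
    fix x assume x: "x \<in> S"
    have "(\<Sum>y\<in>S. complex_of_real (M x y) * v y) = (\<Sum>m\<in>{0..<n}. complex_of_real (M (f (g x)) (f m)) * v (f m))"
      using sum_bij_reindex[OF f, where g = "\<lambda>y. complex_of_real (M x y) * v y"] fg x by simp
    also have "\<dots> = (jmat n f M *\<^sub>v v') $ (g x)"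
      using fg[OF x] v'(1) by (auto simp: jmat_def v_def gf scalar_prod_def intro!: sum.cong)
    also have "\<dots> = lam * v x" using v' fg[OF x] by (simp add: v_def)
    finally show "(\<Sum>y\<in>S. complex_of_real (M x y) * v y) = lam * v x" .
  qed
  ultimately show ?thesis unfolding is_eigenvalue_def by blast
qed

lemma eig_set_finite_ne:
  assumes S: "finite S"
  shows "finite {lam. is_eigenvalue S M lam}" "S \<noteq> {} \<Longrightarrow> {lam. is_eigenvalue S M lam} \<noteq> {}"
proof -
  obtain f where f: "bij_betw f {0..<card S} S" using ex_bij_betw_nat_finite[OF S] by blast
  let ?n = "card S"
  let ?A = "jmat ?n f M"
  have A: "?A \<in> carrier_mat ?n ?n" by (rule jmat_carrier)
  have eq: "{lam. is_eigenvalue S M lam} = {lam. poly (char_poly ?A) lam = 0}"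
    using jmat_eig_to[OF f] jmat_eig_from[OF f] eigenvalue_root_char_poly[OF A] by blast
  from degree_monic_char_poly[OF A] have d: "degree (char_poly ?A) = ?n" and c: "coeff (char_poly ?A) ?n = 1" by auto
  then have "char_poly ?A \<noteq> 0" by auto
  from poly_roots_finite[OF this] show "finite {lam. is_eigenvalue S M lam}" unfolding eq .
  assume "S \<noteq> {}"
  then have "?n > 0" using S by auto
  then have "\<not> constant (poly (char_poly ?A))" using d by (simp add: constant_degree)
  from fundamental_theorem_of_algebra[OF this] show "{lam. is_eigenvalue S M lam} \<noteq> {}" unfolding eq by auto
qed

lemma sr_ge:
  assumes "finite S" "is_eigenvalue S M lam"
  shows "cmod lam \<le> spectral_radius S M"
  unfolding spectral_radius_def using eig_set_finite_ne(1)[OF assms(1), of M] assms(2)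
  by (intro Max_ge) auto

lemma sr_attained:
  assumes "finite S" "S \<noteq> {}"
  shows "\<exists>lam. is_eigenvalue S M lam \<and> cmod lam = spectral_radius S M"
proof -
  have "spectral_radius S M \<in> cmod ` {lam. is_eigenvalue S M lam}"
    unfolding spectral_radius_def using eig_set_finite_ne[OF assms(1), of M] assms(2)
    by (intro Max_in) auto
  then show ?thesis by auto
qed

lemma JB:
  assumes S: "finite S" and le1: "\<And>lam. is_eigenvalue S M lam \<Longrightarrow> cmod lam \<le> 1"
  shows "\<exists>c. \<forall>k x y. x \<in> S \<longrightarrow> y \<in> S \<longrightarrow> \<bar>mpow S M k x y\<bar> \<le> c * (real k + 1) ^ card S"
proof -
  obtain f where f: "bij_betw f {0..<card S} S" using ex_bij_betw_nat_finite[OF S] by blast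
  let ?n = "card S"
  let ?A = "jmat ?n f M"
  have A: "?A \<in> carrier_mat ?n ?n" by (rule jmat_carrier)
  obtain as where cA: "char_poly ?A = (\<Prod>a\<leftarrow>as. [:- a, 1:])" and len: "length as = ?n"
    using char_poly_factorized[OF A] by blast
  have "\<exists> c1 c2. \<forall> k. norm_bound (?A ^\<^sub>m k) (c1 + c2 * of_nat k ^ (?n - 1))"
  proof (rule factored_char_poly_norm_bound_cof[OF A cA])
    fix a assume a: "a \<in> set as"
    have "poly (char_poly ?A) a = 0" unfolding cA by (rule linear_poly_root[OF a])
    then have "eigenvalue ?A a" using eigenvalue_root_char_poly[OF A] by simp
    then show "norm a \<le> 1" using le1 jmat_eig_from[OF f] by auto
  next
    fix a show "length (filter ((=) a) as) \<le> ?n" using len by (metis length_filter_le)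
  qed
  then obtain c1 c2 where b: "\<And>k. norm_bound (?A ^\<^sub>m k) (c1 + c2 * of_nat k ^ (?n - 1))" by blast
  show ?thesis
  proof (intro exI[of _ "\<bar>c1\<bar> + \<bar>c2\<bar>"] allI impI)
    fix k x y assume x: "x \<in> S" and y: "y \<in> S"
    obtain i where i: "i < ?n" "f i = x" using f x unfolding bij_betw_def by force
    obtain j where j: "j < ?n" "f j = y" using f y unfolding bij_betw_def by force
    have "norm ((?A ^\<^sub>m k) $$ (i,j)) \<le> c1 + c2 * of_nat k ^ (?n - 1)"
      using b[of k] i j A unfolding norm_bound_def by auto
    then have 1: "\<bar>mpow S M k x y\<bar> \<le> c1 + c2 * real k ^ (?n - 1)"
      using jmat_pow[OF f i(1) j(1)] i j by simp
    have p1: "real k ^ (?n - 1) \<le> (real k + 1) ^ ?n"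
    proof -
      have "real k ^ (?n - 1) \<le> (real k + 1) ^ (?n - 1)" by (intro power_mono) auto
      also have "\<dots> \<le> (real k + 1) ^ ?n" by (intro power_increasing) auto
      finally show ?thesis .
    qed
    have p2: "1 \<le> (real k + 1) ^ ?n" by (intro one_le_power) auto
    have "c1 + c2 * real k ^ (?n - 1) \<le> \<bar>c1\<bar> + \<bar>c2\<bar> * real k ^ (?n - 1)"
      by (smt (verit, ccfv_SIG) abs_ge_self mult_right_mono zero_le_power of_nat_0_le_iff)
    also have "\<dots> \<le> \<bar>c1\<bar> * (real k + 1) ^ ?n + \<bar>c2\<bar> * (real k + 1) ^ ?n"
      using mult_left_mono[OF p2, of "\<bar>c1\<bar>"] mult_left_mono[OF p1, of "\<bar>c2\<bar>"] by simp
    finally show "\<bar>mpow S M k x y\<bar> \<le> (\<bar>c1\<bar> + \<bar>c2\<bar>) * (real k + 1) ^ ?n"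
      using 1 by (simp add: algebra_simps)
  qed
qed

lemma mpow_scale:
  "mpow S (\<lambda>x y. M x y / s) k x y = mpow S M k x y / s ^ k"
proof (induction k arbitrary: y)
  case 0 then show ?case by simp
next
  case (Suc k)
  show ?case by (simp add: Suc sum_divide_distrib mult.commute)
qed

lemma JBs:
  assumes S: "finite S" and s: "s > 0" and les: "\<And>lam. is_eigenvalue S M lam \<Longrightarrow> cmod lam \<le> s"
  shows "\<exists>c. \<forall>k x y. x \<in> S \<longrightarrow> y \<in> S \<longrightarrow> \<bar>mpow S M k x y\<bar> \<le> c * (real k + 1) ^ card S * s ^ k"
proof -
  have "cmod mu \<le> 1" if ev: "is_eigenvalue S (\<lambda>x y. M x y / s) mu" for mu
  proof -
    obtain v where v: "\<exists>x\<in>S. v x \<noteq> 0" and e: "\<forall>x\<in>S. (\<Sum>y\<in>S. complex_of_real (M x y / s) * v y) = mu * v x"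
      using ev unfolding is_eigenvalue_def by blast
    have "\<forall>x\<in>S. (\<Sum>y\<in>S. complex_of_real (M x y) * v y) = (complex_of_real s * mu) * v x"
    proof
      fix x assume x: "x \<in> S"
      have "(\<Sum>y\<in>S. complex_of_real (M x y) * v y) = complex_of_real s * (\<Sum>y\<in>S. complex_of_real (M x y / s) * v y)"
        using s by (simp add: sum_distrib_left)
      also have "\<dots> = (complex_of_real s * mu) * v x" using e x by simp
      finally show "(\<Sum>y\<in>S. complex_of_real (M x y) * v y) = (complex_of_real s * mu) * v x" .
    qed
    then have "is_eigenvalue S M (complex_of_real s * mu)" using v unfolding is_eigenvalue_def by blast
    then have "cmod (complex_of_real s * mu) \<le> s" by (rule les)
    then have "s * cmod mu \<le> s * 1" using s by (simp add: norm_mult)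
    then show ?thesis using s by simp
  qed
  from JB[OF S this] obtain c where c: "\<forall>k x y. x \<in> S \<longrightarrow> y \<in> S \<longrightarrow> \<bar>mpow S (\<lambda>x y. M x y / s) k x y\<bar> \<le> c * (real k + 1) ^ card S"
    by blast
  show ?thesis
  proof (intro exI[of _ c] allI impI)
    fix k x y assume x: "x \<in> S" and y: "y \<in> S"
    have "\<bar>mpow S M k x y\<bar> / s ^ k \<le> c * (real k + 1) ^ card S"
      using c x y s by (simp add: mpow_scale abs_divide)
    then show "\<bar>mpow S M k x y\<bar> \<le> c * (real k + 1) ^ card S * s ^ k"
      using s by (simp add: divide_le_eq)
  qed
qed

lemma poly_exp_lim:
  fixes q :: real assumes q: "q > 1"
  shows "(\<lambda>j. (real j + 1) ^ D / q ^ j) \<longlonglongrightarrow> 0"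
proof -
  define mu where "mu = root (Suc D) q"
  have mu1: "mu > 1" using q by (simp add: mu_def)
  have mup: "mu ^ Suc D = q" using q unfolding mu_def by (intro real_root_pow_pos2) auto
  have im: "norm (inverse mu) < 1" using mu1 by (simp add: inverse_less_1_iff)
  have l1: "(\<lambda>j. real j * inverse mu ^ j + inverse mu ^ j) \<longlonglongrightarrow> 0 + 0"
    by (intro tendsto_add powser_times_n_limit_0 LIMSEQ_power_zero im)
  have "(\<lambda>j. (real j * inverse mu ^ j + inverse mu ^ j) ^ Suc D) \<longlonglongrightarrow> (0 + 0) ^ Suc D"
    by (intro tendsto_power l1)
  moreover have "\<And>j. real j * inverse mu ^ j + inverse mu ^ j = (real j + 1) / mu ^ j"
    by (simp add: divide_inverse power_inverse distrib_right)
  ultimately have l2: "(\<lambda>j. ((real j + 1) / mu ^ j) ^ Suc D) \<longlonglongrightarrow> 0"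
    by simp
  show ?thesis
  proof (rule tendsto_sandwich[OF _ _ tendsto_const l2])
    show "\<forall>\<^sub>F j in sequentially. 0 \<le> (real j + 1) ^ D / q ^ j" using q by auto
    show "\<forall>\<^sub>F j in sequentially. (real j + 1) ^ D / q ^ j \<le> ((real j + 1) / mu ^ j) ^ Suc D"
    proof (intro always_eventually allI)
      fix j
      have "((real j + 1) / mu ^ j) ^ Suc D = (real j + 1) ^ Suc D / q ^ j"
      proof -
        have "(mu ^ j) ^ Suc D = q ^ j" by (metis mup power_mult mult.commute)
        then show ?thesis by (simp add: power_divide)
      qed
      moreover have "(real j + 1) ^ D \<le> (real j + 1) ^ Suc D" by (intro power_increasing) auto
      ultimately show "(real j + 1) ^ D / q ^ j \<le> ((real j + 1) / mu ^ j) ^ Suc D"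
        using q by (simp add: divide_right_mono)
    qed
  qed
qed

lemma mpow_nonneg:
  assumes "\<forall>x\<in>S. \<forall>y\<in>S. M x y \<ge> 0" "x \<in> S" "y \<in> S"
  shows "mpow S M n x y \<ge> 0"
  using assms(3)
proof (induction n arbitrary: y)
  case (Suc n) then show ?case using assms by (auto intro!: sum_nonneg)
qed simp

lemma srlow:
  fixes S :: "'b set" and M :: "'b \<Rightarrow> 'b \<Rightarrow> real"
  assumes S: "finite S" and rho: "rho > 1" and L: "L > 0" and G: "G \<ge> rho ^ L"
    and f: "\<And>j. f j \<le> j * L"
    and hyp: "\<And>j. j \<ge> 1 \<Longrightarrow> G ^ j \<le> (\<Sum>a\<in>S. \<Sum>b\<in>S. mpow S M (f j) a b)"
  shows "rho \<le> spectral_radius S M"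
proof (rule ccontr)
  assume "\<not> rho \<le> spectral_radius S M"
  then have lt: "spectral_radius S M < rho" by simp
  define s where "s = max (spectral_radius S M) 1"
  have s1: "s \<ge> 1" and srho: "s < rho" using lt rho by (auto simp: s_def)
  have les: "cmod lam \<le> s" if "is_eigenvalue S M lam" for lam
    using sr_ge[OF S that] by (simp add: s_def)
  obtain c where c: "\<And>k x y. x \<in> S \<Longrightarrow> y \<in> S \<Longrightarrow> \<bar>mpow S M k x y\<bar> \<le> c * (real k + 1) ^ card S * s ^ k"
    using JBs[OF S _ les] s1 by fastforce
  define n where "n = card S"
  define q where "q = G / s ^ L"
  have "rho ^ L > 0" using rho by simp
  then have Gpos: "G > 0" using G by linarith
  have "(rho / s) ^ L > 1" using srho s1 L by (simp add: one_less_power)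
  moreover have "G / s ^ L \<ge> rho ^ L / s ^ L" using G s1 by (simp add: divide_right_mono)
  ultimately have q1: "q > 1" unfolding q_def by (simp add: power_divide)
  define K where "K = real n * real n * \<bar>c\<bar> * real L ^ n"
  have bound: "q ^ j \<le> K * (real j + 1) ^ n" if j: "j \<ge> 1" for j
  proof -
    have "G ^ j \<le> (\<Sum>a\<in>S. \<Sum>b\<in>S. mpow S M (f j) a b)" using hyp[OF j] .
    also have "\<dots> \<le> (\<Sum>a\<in>S. \<Sum>b\<in>S. \<bar>c\<bar> * (real (f j) + 1) ^ n * s ^ (f j))"
    proof (intro sum_mono)
      fix a b assume a: "a \<in> S" and b: "b \<in> S"
      have "mpow S M (f j) a b \<le> c * (real (f j) + 1) ^ n * s ^ (f j)"
        using c[OF a b, of "f j"] unfolding n_def by linarith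
      also have "\<dots> \<le> \<bar>c\<bar> * (real (f j) + 1) ^ n * s ^ (f j)"
        using s1 by (intro mult_right_mono) auto
      finally show "mpow S M (f j) a b \<le> \<bar>c\<bar> * (real (f j) + 1) ^ n * s ^ (f j)" .
    qed
    also have "\<dots> = real n * real n * (\<bar>c\<bar> * (real (f j) + 1) ^ n * s ^ (f j))" by (simp add: n_def)
    also have "\<dots> \<le> real n * real n * (\<bar>c\<bar> * (real L * (real j + 1)) ^ n * s ^ (j * L))"
    proof -
      have "f j + 1 \<le> L * (j + 1)" using f[of j] L by (simp add: algebra_simps)
      then have "real (f j + 1) \<le> real (L * (j + 1))" by (rule of_nat_mono)
      then have "real (f j) + 1 \<le> real L * (real j + 1)" by (simp add: algebra_simps)
      then have "(real (f j) + 1) ^ n \<le> (real L * (real j + 1)) ^ n" by (intro power_mono) auto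
      moreover have "s ^ f j \<le> s ^ (j * L)" using f[of j] s1 by (intro power_increasing) auto
      ultimately have "\<bar>c\<bar> * (real (f j) + 1) ^ n * s ^ (f j) \<le> \<bar>c\<bar> * (real L * (real j + 1)) ^ n * s ^ (j * L)"
        using s1 by (intro mult_mono mult_left_mono) auto
      then show ?thesis by (intro mult_left_mono) auto
    qed
    also have "\<dots> = K * (real j + 1) ^ n * (s ^ L) ^ j"
      by (simp add: K_def power_mult_distrib power_mult mult.commute mult.left_commute)
    finally have "G ^ j \<le> K * (real j + 1) ^ n * (s ^ L) ^ j" .
    then show ?thesis using s1 unfolding q_def by (simp add: power_divide divide_le_eq)
  qed
  have lim: "(\<lambda>j. (real j + 1) ^ n / q ^ j) \<longlonglongrightarrow> 0" by (rule poly_exp_lim[OF q1])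
  have K0: "K \<ge> 0" by (simp add: K_def)
  have "\<forall>\<^sub>F j in sequentially. (real j + 1) ^ n / q ^ j < 1 / (K + 1)"
    using order_tendstoD(2)[OF lim, of "1 / (K + 1)"] K0 by simp
  then obtain j0 where j0: "\<And>j. j \<ge> j0 \<Longrightarrow> (real j + 1) ^ n / q ^ j < 1 / (K + 1)"
    unfolding eventually_sequentially by blast
  define j where "j = max j0 1"
  have a: "(real j + 1) ^ n / q ^ j < 1 / (K + 1)" using j0[of j] by (simp add: j_def)
  have b: "q ^ j \<le> K * (real j + 1) ^ n" using bound[of j] by (simp add: j_def)
  have Qp: "q ^ j > 0" using q1 by simp
  have ap: "(real j + 1) ^ n \<ge> 1" by (intro one_le_power) auto
  from a have "(real j + 1) ^ n * (K + 1) < q ^ j" using Qp K0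
    by (simp add: divide_less_eq field_simps)
  then have "(real j + 1) ^ n * (K + 1) < K * (real j + 1) ^ n" using b by linarith
  then show False using ap by (simp add: algebra_simps)
qed

lemma mpow_eigvec:
  assumes fin: "finite S" and e: "\<forall>x\<in>S. (\<Sum>y\<in>S. complex_of_real (M x y) * v y) = lam * v x" and x: "x \<in> S"
  shows "(\<Sum>y\<in>S. complex_of_real (mpow S M n x y) * v y) = lam ^ n * v x"
proof (induction n)
  case 0
  have "(\<Sum>y\<in>S. complex_of_real (mpow S M 0 x y) * v y) = (\<Sum>y\<in>S. if y = x then v y else 0)"
    by (intro sum.cong) auto
  also have "\<dots> = v x" using x fin by (simp add: sum.delta[of S x v])
  finally show ?case by simp
next
  case (Suc n)
  have "(\<Sum>y\<in>S. complex_of_real (mpow S M (Suc n) x y) * v y)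
      = (\<Sum>y\<in>S. \<Sum>z\<in>S. complex_of_real (mpow S M n x z) * (complex_of_real (M z y) * v y))"
    by (simp add: sum_distrib_right mult.assoc)
  also have "\<dots> = (\<Sum>z\<in>S. complex_of_real (mpow S M n x z) * (\<Sum>y\<in>S. complex_of_real (M z y) * v y))"
    by (subst sum.swap) (simp add: sum_distrib_left)
  also have "\<dots> = (\<Sum>z\<in>S. complex_of_real (mpow S M n x z) * (lam * v z))"
    using e by (intro sum.cong) auto
  also have "\<dots> = lam * (\<Sum>z\<in>S. complex_of_real (mpow S M n x z) * v z)"
    by (simp add: sum_distrib_left mult.left_commute)
  also have "\<dots> = lam ^ Suc n * v x" using Suc by simp
  finally show ?case .
qed

lemma growth_lower:
  assumes S: "finite S" "S \<noteq> {}" and nn: "\<forall>x\<in>S. \<forall>y\<in>S. M x y \<ge> 0"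
  shows "spectral_radius S M ^ n \<le> (\<Sum>a\<in>S. \<Sum>b\<in>S. mpow S M n a b)"
proof -
  obtain lam where lam: "is_eigenvalue S M lam" "cmod lam = spectral_radius S M"
    using sr_attained[OF S] by blast
  obtain v where v: "\<exists>x\<in>S. v x \<noteq> 0" and e: "\<forall>x\<in>S. (\<Sum>y\<in>S. complex_of_real (M x y) * v y) = lam * v x"
    using lam(1) unfolding is_eigenvalue_def by blast
  define m where "m = Max ((\<lambda>y. cmod (v y)) ` S)"
  have "m \<in> (\<lambda>y. cmod (v y)) ` S" unfolding m_def using S by (intro Max_in) auto
  then obtain x where x: "x \<in> S" "cmod (v x) = m" by auto
  have mx: "\<And>y. y \<in> S \<Longrightarrow> cmod (v y) \<le> m" unfolding m_def using S by (intro Max_ge) auto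
  have mpos: "m > 0" using v mx by (smt (verit) norm_le_zero_iff)
  have "spectral_radius S M ^ n * m = cmod (lam ^ n * v x)"
    using lam x by (simp add: norm_mult norm_power)
  also have "\<dots> = cmod (\<Sum>y\<in>S. complex_of_real (mpow S M n x y) * v y)"
    using mpow_eigvec[OF S(1) e x(1)] by simp
  also have "\<dots> \<le> (\<Sum>y\<in>S. cmod (complex_of_real (mpow S M n x y) * v y))" by (rule norm_sum)
  also have "\<dots> \<le> (\<Sum>y\<in>S. mpow S M n x y * m)"
  proof (intro sum_mono)
    fix y assume y: "y \<in> S"
    have "mpow S M n x y \<ge> 0" using mpow_nonneg[OF nn x(1) y] .
    then show "cmod (complex_of_real (mpow S M n x y) * v y) \<le> mpow S M n x y * m"
      using mx[OF y] by (simp add: norm_mult mult_left_mono)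
  qed
  also have "\<dots> = (\<Sum>y\<in>S. mpow S M n x y) * m" by (simp add: sum_distrib_right)
  finally have "spectral_radius S M ^ n \<le> (\<Sum>y\<in>S. mpow S M n x y)" using mpos by simp
  also have "\<dots> \<le> (\<Sum>a\<in>S. \<Sum>b\<in>S. mpow S M n a b)"
    using S x(1) mpow_nonneg[OF nn]
    by (intro member_le_sum[of x S "\<lambda>a. \<Sum>b\<in>S. mpow S M n a b"]) (auto intro!: sum_nonneg)
  finally show ?thesis .
qed

definition paths :: "'b set \<Rightarrow> ('b \<Rightarrow> 'b \<Rightarrow> real) \<Rightarrow> nat \<Rightarrow> 'b list set" where
  "paths S M n = {p. length p = Suc n \<and> set p \<subseteq> S \<and> successively (\<lambda>x y. M y x = 1) p}"

lemma paths_finite: "finite S \<Longrightarrow> finite (paths S M n)"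
  by (rule finite_subset[OF _ finite_lists_length_eq[of S "Suc n"]]) (auto simp: paths_def)

lemma paths_ne: "p \<in> paths S M n \<Longrightarrow> p \<noteq> [] \<and> hd p \<in> S \<and> last p \<in> S"
proof -
  assume p: "p \<in> paths S M n"
  then have ne: "p \<noteq> []" by (auto simp: paths_def)
  have "hd p \<in> set p" "last p \<in> set p" using ne by auto
  then show ?thesis using p ne by (auto simp: paths_def)
qed

lemma paths_0: "paths S M 0 = (\<lambda>x. [x]) ` S"
  by (auto simp: paths_def length_Suc_conv)

lemma paths_Suc: "paths S M (Suc n) = (\<Union>b\<in>S. Cons b ` {p \<in> paths S M n. M (hd p) b = 1})"
proof (intro equalityI subsetI)
  fix p assume "p \<in> paths S M (Suc n)"
  then obtain b p' where p: "p = b # p'" "length p' = Suc n" "set p' \<subseteq> S" "b \<in> S"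
    "successively (\<lambda>x y. M y x = 1) (b # p')"
    by (auto simp: paths_def length_Suc_conv)
  then have "M (hd p') b = 1" "successively (\<lambda>x y. M y x = 1) p'" by (auto simp: successively_Cons)
  then show "p \<in> (\<Union>b\<in>S. Cons b ` {p \<in> paths S M n. M (hd p) b = 1})"
    using p by (auto simp: paths_def)
next
  fix p assume "p \<in> (\<Union>b\<in>S. Cons b ` {p \<in> paths S M n. M (hd p) b = 1})"
  then show "p \<in> paths S M (Suc n)" by (auto simp: paths_def successively_Cons)
qed

lemma mpow_card:
  assumes S: "finite S" and M01: "\<forall>x\<in>S. \<forall>y\<in>S. M x y = 0 \<or> M x y = 1" and a: "a \<in> S" and b: "b \<in> S"
  shows "mpow S M n a b = card {p \<in> paths S M n. hd p = b \<and> last p = a}"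
  using b
proof (induction n arbitrary: b)
  case 0
  have "{p \<in> paths S M 0. hd p = b \<and> last p = a} = (if a = b then {[b]} else {})"
    using 0 by (auto simp: paths_0)
  then show ?case by simp
next
  case (Suc n)
  define Q where "Q z = {p \<in> paths S M n. hd p = z \<and> last p = a}" for z
  define Z where "Z = {z \<in> S. M z b = 1}"
  have "mpow S M (Suc n) a b = (\<Sum>z\<in>S. if M z b = 1 then real (card (Q z)) else 0)"
  proof (simp, intro sum.cong refl)
    fix z assume z: "z \<in> S"
    show "mpow S M n a z * M z b = (if M z b = 1 then real (card (Q z)) else 0)"
    proof (cases "M z b = 1")
      case True then show ?thesis using Suc.IH[OF z] unfolding Q_def by simp
    next
      case False then have "M z b = 0" using M01 z Suc.prems by blast
      then show ?thesis by simp
    qed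
  qed
  also have "\<dots> = (\<Sum>z\<in>Z. real (card (Q z)))"
    unfolding Z_def using S by (simp add: sum.inter_filter)
  also have "\<dots> = real (card (\<Union>z\<in>Z. Q z))"
    using S paths_finite[OF S] unfolding Z_def Q_def
    by (subst card_UN_disjoint) auto
  also have "\<dots> = real (card (Cons b ` (\<Union>z\<in>Z. Q z)))"
    by (simp add: card_image)
  also have "Cons b ` (\<Union>z\<in>Z. Q z) = {p \<in> paths S M (Suc n). hd p = b \<and> last p = a}"
  proof (intro equalityI subsetI)
    fix p assume "p \<in> Cons b ` (\<Union>z\<in>Z. Q z)"
    then obtain z p' where "p = b # p'" "z \<in> Z" "p' \<in> paths S M n" "hd p' = z" "last p' = a"
      unfolding Q_def by auto
    then show "p \<in> {p \<in> paths S M (Suc n). hd p = b \<and> last p = a}"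
      using Suc.prems unfolding paths_Suc Z_def by (auto simp: paths_def)
  next
    fix p assume "p \<in> {p \<in> paths S M (Suc n). hd p = b \<and> last p = a}"
    then obtain b' p' where "p = b' # p'" "b' \<in> S" "p' \<in> paths S M n" "M (hd p') b' = 1" "hd p = b" "last p = a"
      unfolding paths_Suc by auto
    moreover have "hd p' \<in> S" "p' \<noteq> []" using paths_ne[OF \<open>p' \<in> paths S M n\<close>] by auto
    ultimately show "p \<in> Cons b ` (\<Union>z\<in>Z. Q z)" unfolding Z_def Q_def by auto
  qed
  finally show ?case .
qed

lemma paths_card_sum:
  assumes S: "finite S" and M01: "\<forall>x\<in>S. \<forall>y\<in>S. M x y = 0 \<or> M x y = 1"
  shows "(\<Sum>a\<in>S. \<Sum>b\<in>S. mpow S M n a b) = real (card (paths S M n))"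
proof -
  have ne: "\<And>p. p \<in> paths S M n \<Longrightarrow> p \<noteq> [] \<and> hd p \<in> S \<and> last p \<in> S"
    by (rule paths_ne)
  have eq: "paths S M n = (\<Union>a\<in>S. \<Union>b\<in>S. {p \<in> paths S M n. hd p = b \<and> last p = a})"
    using ne by blast
  have "real (card (paths S M n)) = real (\<Sum>a\<in>S. card (\<Union>b\<in>S. {p \<in> paths S M n. hd p = b \<and> last p = a}))"
    using S paths_finite[OF S] by (subst eq, subst card_UN_disjoint) auto
  also have "\<dots> = real (\<Sum>a\<in>S. \<Sum>b\<in>S. card {p \<in> paths S M n. hd p = b \<and> last p = a})"
    using S paths_finite[OF S] by (intro arg_cong[where f = real] sum.cong refl, subst card_UN_disjoint) auto
  also have "\<dots> = (\<Sum>a\<in>S. \<Sum>b\<in>S. mpow S M n a b)"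
    using mpow_card[OF S M01] by simp
  finally show ?thesis by simp
qed

definition cat :: "'a list \<Rightarrow> 'a list list \<Rightarrow> 'a list" where
  "cat c Bs = concat (map (\<lambda>B. B @ c) Bs)"

lemma cat_simps[simp]: "cat c [] = []" "cat c (B # Bs) = B @ c @ cat c Bs"
  by (auto simp: cat_def)

lemma sublist_trans': "sublist x y \<Longrightarrow> sublist y z \<Longrightarrow> sublist x z"
  by (rule sublist_order.order_trans)

lemma cat_prefix:
  assumes "prefix x (cat c Bs)" "length x \<ge> h" "h \<ge> 1" "\<forall>B\<in>set Bs. length B \<ge> h"
  shows "Bs \<noteq> [] \<and> take h x = take h (hd Bs)"
proof (cases Bs)
  case Nil then show ?thesis using assms by (auto simp: prefix_def)
next
  case (Cons B Bs')
  from assms(1) obtain zs where "B @ c @ cat c Bs' = x @ zs" unfolding prefix_def Cons by auto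
  then have "take h (B @ c @ cat c Bs') = take h (x @ zs)" by simp
  then show ?thesis using assms(2,4) Cons by simp
qed

lemma cat_avoid:
  assumes Wlen: "\<forall>w\<in>W. length w = k + 1"
    and hc: "2 * h + length c \<le> k + 1" "h \<ge> 1" "h \<le> L"
    and G: "\<forall>B\<in>G. length B = L \<and> (\<forall>w\<in>W. \<not> sublist w B) \<and> take h B \<notin> F \<and> drop (L - h) B \<notin> F"
    and F: "F = {v. length v = h \<and> (\<exists>w\<in>W. sublist v w)}"
    and w: "w \<in> W"
  shows "set Bs \<subseteq> G \<Longrightarrow> \<not> sublist w (cat c Bs)"
proof (induction Bs)
  case Nil
  then show ?case using Wlen w by (auto simp: sublist_def)
next
  case (Cons B Bs)
  let ?R = "cat c Bs"
  have B: "B \<in> G" and Bs: "set Bs \<subseteq> G" using Cons.prems by auto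
  have lw: "length w = k + 1" using Wlen w by auto
  have BsL: "\<forall>B\<in>set Bs. length B \<ge> h" using Bs G hc by auto
  have key: False if "prefix x2 ?R" "length x2 \<ge> h" "sublist x2 w" for x2
  proof -
    from cat_prefix[OF that(1,2) hc(2) BsL] have ne: "Bs \<noteq> []" and t: "take h x2 = take h (hd Bs)" by auto
    have "hd Bs \<in> G" using ne Bs by (cases Bs) auto
    moreover have "take h x2 \<in> F" unfolding F using that(2,3) w
      by (auto intro: sublist_trans'[OF sublist_take])
    ultimately show False using t G by auto
  qed
  show ?case
  proof
    assume "sublist w (cat c (B # Bs))"
    then have "sublist w (B @ (c @ ?R))" by simp
    then consider "sublist w B" | "sublist w (c @ ?R)"
      | x1 x2 where "w = x1 @ x2" "suffix x1 B" "prefix x2 (c @ ?R)"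
      unfolding sublist_append by blast
    then show False
    proof cases
      case 1 then show ?thesis using B G w by auto
    next
      case 2
      then consider "sublist w c" | "sublist w ?R" | x1 x2 where "w = x1 @ x2" "suffix x1 c" "prefix x2 ?R"
        unfolding sublist_append by blast
      then show ?thesis
      proof cases
        case 1 then show ?thesis using sublist_length_le[OF 1] lw hc by simp
      next
        case 2 then show ?thesis using Cons.IH Bs by simp
      next
        case 3
        have "length x1 \<le> length c" using 3(2) by (auto simp: suffix_def)
        then have "length x2 \<ge> h" using 3(1) lw hc by simp
        moreover have "sublist x2 w" unfolding 3(1) sublist_def by (intro exI[of _ x1] exI[of _ "[]"]) simp
        ultimately show ?thesis using key 3(3) by blast
      qed
    next
      case 3
      show ?thesis
      proof (cases "length x1 \<ge> h")
        case True
        obtain zs where zs: "B = zs @ x1" using 3(2) by (auto simp: suffix_def)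
        have lB: "length B = L" using B G by auto
        have e: "L - (h + length zs) = length x1 - h" using zs lB True by simp
        have "drop (L - h) B = drop (length x1 - h) x1" using zs lB True e by simp
        moreover have "sublist (drop (length x1 - h) x1) w"
          unfolding 3(1) sublist_def
          by (intro exI[of _ "take (length x1 - h) x1"] exI[of _ x2]) simp
        moreover have "length (drop (length x1 - h) x1) = h" using True by simp
        ultimately have "drop (L - h) B \<in> F" unfolding F using w by auto
        then show ?thesis using B G by auto
      next
        case False
        then have lx2: "length x2 > length c + h" using 3(1) lw hc by simp
        from 3(3) consider "prefix x2 c" | us where "x2 = c @ us" "prefix us ?R"
          unfolding prefix_append by blast
        then show ?thesis
        proof cases
          case 1 then show ?thesis using prefix_length_le[OF 1] lx2 by simp
        next
          case 2
          have "length us \<ge> h" using 2(1) lx2 by simp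
          moreover have "sublist us w" unfolding 3(1) 2(1) sublist_def by (intro exI[of _ "x1 @ c"] exI[of _ "[]"]) simp
          ultimately show ?thesis using key 2(2) by blast
        qed
      qed
    qed
  qed
qed

lemma cat_adm:
  assumes bca: "successively P (b # c @ [a])"
    and G: "\<forall>B\<in>G. successively P B \<and> B \<noteq> [] \<and> hd B = a \<and> last B = b"
  shows "set Bs \<subseteq> G \<Longrightarrow> successively P (cat c Bs) \<and> (Bs \<noteq> [] \<longrightarrow> hd (cat c Bs) = a)"
proof (induction Bs)
  case Nil then show ?case by simp
next
  case (Cons B Bs)
  let ?R = "cat c Bs"
  have B: "successively P B" "B \<noteq> []" "hd B = a" "last B = b" using G Cons.prems by auto
  have IH1: "successively P ?R" using Cons by auto
  have IH2: "hd ?R = a" if "?R \<noteq> []" using Cons that by (cases Bs) auto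
  note IH = IH1 IH2
  have bc: "successively P (b # c)" "P (last (b # c)) a"
    using bca successively_append_iff[of P "b # c" "[a]"] by auto
  have "successively P ((b # c) @ ?R)"
    using bc IH successively_append_iff[of P "b # c" ?R] by auto
  then have bcR: "successively P (b # (c @ ?R))" by simp
  then have cR: "successively P (c @ ?R)" and bh: "c @ ?R \<noteq> [] \<Longrightarrow> P b (hd (c @ ?R))"
    by (auto simp: successively_Cons)
  have "successively P (B @ (c @ ?R))"
    using B cR bh successively_append_iff[of P B "c @ ?R"] by auto
  then show ?case using B by simp
qed

lemma cat_len:
  "\<forall>B\<in>G. length B = L \<Longrightarrow> set Bs \<subseteq> G \<Longrightarrow> length (cat c Bs) = length Bs * (L + length c)"
  by (induction Bs) auto

lemma cat_inj:
  assumes G: "\<forall>B\<in>G. length B = L"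
  shows "set Bs \<subseteq> G \<Longrightarrow> set Bs' \<subseteq> G \<Longrightarrow> length Bs = length Bs' \<Longrightarrow> cat c Bs = cat c Bs' \<Longrightarrow> Bs = Bs'"
proof (induction Bs arbitrary: Bs')
  case Nil then show ?case by simp
next
  case (Cons B Bs)
  then obtain B' Bs'' where Bs': "Bs' = B' # Bs''" by (cases Bs') auto
  have "length B = length B'" using G Cons.prems Bs' by auto
  then have "B = B'" "c @ cat c Bs = c @ cat c Bs''" using Cons.prems(4) Bs' by auto
  then show ?case using Cons Bs' by auto
qed

lemma adm_succ: "admissible T w \<longleftrightarrow> successively (\<lambda>x y. T y x = 1) w"
  by (simp add: admissible_def successively_conv_nth)

lemma succ_take: "successively P s \<Longrightarrow> successively P (take k s)"
  using successively_append_iff[of P "take k s" "drop k s"] by simp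

lemma succ_drop: "successively P s \<Longrightarrow> successively P (drop k s)"
  using successively_append_iff[of P "take k s" "drop k s"] by simp

lemma adm_take_drop: "admissible T s \<Longrightarrow> admissible T (take k (drop i s))"
  by (simp add: adm_succ succ_take succ_drop)

definition win :: "nat \<Rightarrow> nat \<Rightarrow> 'a list \<Rightarrow> 'a list list" where
  "win k n s = map (\<lambda>i. take k (drop i s)) [0..<Suc n]"

lemma win_nth: "i \<le> n \<Longrightarrow> win k n s ! i = take k (drop i s)"
  unfolding win_def by (simp add: nth_append less_Suc_eq_le del: upt_Suc)

lemma hd_butlast_tl: "length w \<ge> 2 \<Longrightarrow> w = hd (butlast w) # tl w"
  by (cases w) auto

lemma win_paths:
  assumes k: "k \<ge> 1" and len: "length s = n + k" and adm: "admissible T s"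
    and C: "\<forall>w\<in>C. length w = k + 1 \<and> \<not> sublist w s"
  shows "win k n s \<in> paths (adm_words T k) (Tk_del T k C) n"
proof -
  let ?u = "\<lambda>i. take k (drop i s)"
  have uadm: "?u i \<in> adm_words T k" if "i \<le> n" for i
    using that len adm_take_drop[OF adm] by (auto simp: adm_words_def)
  have step: "Tk_del T k C (?u (Suc i)) (?u i) = 1" if i: "i < n" for i
  proof -
    have l: "length (drop (Suc i) s) \<ge> k" using len i by simp
    have "butlast (?u (Suc i)) = take (k - 1) (drop (Suc i) s)" using l by (simp add: butlast_take)
    moreover have "tl (?u i) = take (k - 1) (drop (Suc i) s)" by (simp add: tl_take drop_Suc tl_drop)
    ultimately have Tk1: "Tk T k (?u (Suc i)) (?u i) = 1"
      using uadm[of i] uadm[of "Suc i"] i k len unfolding Tk_def by simp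
    have E0: "Ew w (?u (Suc i)) (?u i) = 0" if w: "w \<in> C" for w
    proof (rule ccontr)
      assume "Ew w (?u (Suc i)) (?u i) \<noteq> 0"
      then have e: "?u (Suc i) = tl w" "?u i = butlast w" unfolding Ew_def by (auto split: if_splits)
      have lw: "length w = k + 1" using C w by auto
      have "take (k + 1) (drop i s) = w"
      proof (rule nth_equalityI)
        show "length (take (k + 1) (drop i s)) = length w" using lw len i by simp
        fix j assume j: "j < length (take (k + 1) (drop i s))"
        then have j': "j < k + 1" "i + j < length s" by auto
        show "take (k + 1) (drop i s) ! j = w ! j"
        proof (cases "j < k")
          case True
          have "w ! j = butlast w ! j" using True lw by (simp add: nth_butlast)
          also have "\<dots> = ?u i ! j" using e by simp
          also have "\<dots> = s ! (i + j)" using True j' by simp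
          finally show ?thesis using j' by simp
        next
          case False
          then have jk: "j = k" using j' by simp
          have "w ! j = tl w ! (k - 1)" using jk k lw by (simp add: nth_tl)
          also have "\<dots> = ?u (Suc i) ! (k - 1)" using e by simp
          also have "\<dots> = s ! (Suc i + (k - 1))" using k j' jk len i by simp
          finally show ?thesis using j' jk k by simp
        qed
      qed
      then have "sublist w s" by (metis sublist_drop sublist_take sublist_trans')
      then show False using C w by auto
    qed
    have "(\<Sum>w\<in>C. Ew w (?u (Suc i)) (?u i)) = 0" using E0 by simp
    then show ?thesis using Tk1 unfolding Tk_del_def by simp
  qed
  have "successively (\<lambda>x y. Tk_del T k C y x = 1) (win k n s)"
    unfolding successively_conv_nth
  proof (intro allI impI)
    fix i assume "Suc i < length (win k n s)"
    then have i: "i < n" by (simp add: win_def)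
    show "Tk_del T k C (win k n s ! Suc i) (win k n s ! i) = 1"
      using step[OF i] i by (simp add: win_nth)
  qed
  moreover have "set (win k n s) \<subseteq> adm_words T k"
    using uadm unfolding win_def by auto
  moreover have "length (win k n s) = Suc n" by (simp add: win_def)
  ultimately show ?thesis unfolding paths_def by simp
qed

lemma win_inj:
  assumes k: "k \<ge> 1"
  shows "inj_on (win k n) {s. length s = n + k}"
proof (rule inj_onI)
  fix s s' assume s: "s \<in> {s. length s = n + k}" and s': "s' \<in> {s. length s = n + k}" and eq: "win k n s = win k n s'"
  have rep: "x ! t = (win k n x ! min t n) ! (t - min t n)" if "length x = n + k" "t < n + k" for x t
    using that k by (simp add: win_nth min_def)
  show "s = s'"
  proof (rule nth_equalityI)
    show "length s = length s'" using s s' by simp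
    fix t assume "t < length s"
    then show "s ! t = s' ! t" using rep[of s t] rep[of s' t] s s' eq by simp
  qed
qed

lemma Tkdel01:
  assumes k: "k \<ge> 1" and w1: "w1 \<in> adm_words T (k + 1)" and w2: "w2 \<in> adm_words T (k + 1)"
    and u: "u \<in> adm_words T k" and v: "v \<in> adm_words T k"
  shows "Tk_del T k {w1, w2} u v = 0 \<or> Tk_del T k {w1, w2} u v = 1"
proof -
  have Tk01: "Tk T k u v = 0 \<or> Tk T k u v = 1" unfolding Tk_def by simp
  have E01: "Ew w u v = 0 \<or> Ew w u v = 1" for w unfolding Ew_def by simp
  have ETk: "Tk T k u v = 1" if w: "w \<in> {w1, w2}" "Ew w u v = 1" for w
  proof -
    have e: "u = tl w" "v = butlast w" using w(2) unfolding Ew_def by (auto split: if_splits)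
    have "butlast u = tl v" using e by (simp add: butlast_tl)
    then show ?thesis using u v k unfolding Tk_def by (simp add: adm_words_def)
  qed
  have uniq: "w1 = w2" if "Ew w1 u v = 1" "Ew w2 u v = 1"
  proof -
    have e: "u = tl w1" "v = butlast w1" "u = tl w2" "v = butlast w2"
      using that unfolding Ew_def by (auto split: if_splits)
    have "length w1 \<ge> 2" "length w2 \<ge> 2" using w1 w2 k by (auto simp: adm_words_def)
    then show ?thesis using e hd_butlast_tl by metis
  qed
  show ?thesis
  proof (cases "w1 = w2")
    case True
    then show ?thesis using E01[of w1] ETk[of w1] Tk01 unfolding Tk_del_def by auto
  next
    case False
    then have s: "(\<Sum>w\<in>{w1, w2}. Ew w u v) = Ew w1 u v + Ew w2 u v" by simp
    show ?thesis using E01[of w1] E01[of w2] ETk[of w1] ETk[of w2] Tk01 uniq False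
      unfolding Tk_del_def s by auto
  qed
qed

lemma adm_words_finite: "finite (adm_words (T::'a::finite \<Rightarrow> 'a \<Rightarrow> real) n)"
  by (rule finite_subset[OF _ finite_lists_length_eq[of UNIV n]]) (auto simp: adm_words_def)

lemma paths_UNIV: "paths UNIV T n = adm_words T (Suc n)"
  by (auto simp: paths_def adm_words_def adm_succ)

lemma adm_words_0: "adm_words T 0 = {[]}"
  by (auto simp: adm_words_def admissible_def)

lemma N_lower:
  fixes T :: "'a::finite \<Rightarrow> 'a \<Rightarrow> real"
  assumes T01: "\<forall>x y. T x y = 0 \<or> T x y = 1"
  shows "spectral_radius UNIV T ^ n \<le> real (card (adm_words T (Suc n)))"
proof -
  have nn: "\<forall>x\<in>UNIV. \<forall>y\<in>UNIV. T x y \<ge> 0" using T01 by (metis order_refl zero_le_one)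
  have "spectral_radius UNIV T ^ n \<le> (\<Sum>a\<in>UNIV. \<Sum>b\<in>UNIV. mpow UNIV T n a b)"
    by (rule growth_lower[OF finite_UNIV _ nn]) simp
  also have "\<dots> = real (card (paths UNIV T n))"
    by (rule paths_card_sum) (use T01 in auto)
  finally show ?thesis by (simp add: paths_UNIV)
qed

lemma N_upper:
  fixes T :: "'a::finite \<Rightarrow> 'a \<Rightarrow> real"
  assumes T01: "\<forall>x y. T x y = 0 \<or> T x y = 1" and lp: "spectral_radius UNIV T > 0"
  shows "\<exists>C\<ge>1. \<forall>n. real (card (adm_words T n)) \<le> C * (real n + 1) ^ card (UNIV::'a set) * spectral_radius UNIV T ^ n"
proof -
  let ?l = "spectral_radius UNIV T"
  let ?r = "card (UNIV::'a set)"
  have "\<exists>c. \<forall>k x y. x \<in> (UNIV::'a set) \<longrightarrow> y \<in> UNIV \<longrightarrow> \<bar>mpow UNIV T k x y\<bar> \<le> c * (real k + 1) ^ ?r * ?l ^ k"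
    by (rule JBs[OF finite_UNIV lp]) (rule sr_ge[OF finite_UNIV])
  then obtain c where c0: "\<forall>k x y. x \<in> (UNIV::'a set) \<longrightarrow> y \<in> UNIV \<longrightarrow> \<bar>mpow UNIV T k x y\<bar> \<le> c * (real k + 1) ^ ?r * ?l ^ k"
    by blast
  have c: "\<And>k x y. \<bar>mpow UNIV T k x y\<bar> \<le> c * (real k + 1) ^ ?r * ?l ^ k" using c0 by simp
  define C where "C = max 1 (real ?r * real ?r * \<bar>c\<bar> / ?l)"
  have C1: "C \<ge> 1" by (simp add: C_def)
  have "real (card (adm_words T n)) \<le> C * (real n + 1) ^ ?r * ?l ^ n" for n
  proof (cases n)
    case 0
    then show ?thesis using C1 by (simp add: adm_words_0)
  next
    case (Suc m)
    have "real (card (adm_words T (Suc m))) = (\<Sum>a\<in>UNIV. \<Sum>b\<in>UNIV. mpow UNIV T m a b)"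
      using paths_card_sum[of UNIV T m] T01 by (simp add: paths_UNIV)
    also have "\<dots> \<le> (\<Sum>a\<in>(UNIV::'a set). \<Sum>b\<in>(UNIV::'a set). \<bar>c\<bar> * (real m + 1) ^ ?r * ?l ^ m)"
    proof (intro sum_mono)
      fix a b
      have "mpow UNIV T m a b \<le> c * (real m + 1) ^ ?r * ?l ^ m" using c[of m a b] by linarith
      also have "\<dots> \<le> \<bar>c\<bar> * (real m + 1) ^ ?r * ?l ^ m" using lp by (intro mult_right_mono) auto
      finally show "mpow UNIV T m a b \<le> \<bar>c\<bar> * (real m + 1) ^ ?r * ?l ^ m" .
    qed
    also have "\<dots> = (real ?r * real ?r * \<bar>c\<bar> / ?l) * (real m + 1) ^ ?r * ?l ^ Suc m"
      using lp by simp
    also have "\<dots> \<le> C * (real (Suc m) + 1) ^ ?r * ?l ^ Suc m"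
    proof (intro mult_mono)
      show "real ?r * real ?r * \<bar>c\<bar> / ?l \<le> C" by (simp add: C_def)
      show "(real m + 1) ^ ?r \<le> (real (Suc m) + 1) ^ ?r" by (intro power_mono) auto
    qed (use C1 lp in auto)
    finally show ?thesis using Suc by simp
  qed
  then show ?thesis using C1 by blast
qed

lemma adm_append: "admissible T (x @ y) \<Longrightarrow> admissible T x \<and> admissible T y"
  by (simp add: adm_succ successively_append_iff)

lemma cnt_bad1:
  fixes T :: "'a::finite \<Rightarrow> 'a \<Rightarrow> real"
  assumes W: "\<forall>w\<in>W. length w = k + 1" "finite W" and L: "L \<ge> k + 1"
  shows "card {B \<in> adm_words T L. \<exists>w\<in>W. sublist w B}
     \<le> (\<Sum>w\<in>W. \<Sum>i\<le>L - (k + 1). card (adm_words T i) * card (adm_words T (L - (k + 1) - i)))"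
proof -
  let ?f = "\<lambda>w. \<lambda>(x, y). x @ w @ y"
  have sub: "{B \<in> adm_words T L. \<exists>w\<in>W. sublist w B} \<subseteq>
    (\<Union>w\<in>W. \<Union>i\<in>{..L - (k + 1)}. ?f w ` (adm_words T i \<times> adm_words T (L - (k + 1) - i)))"
  proof
    fix B assume "B \<in> {B \<in> adm_words T L. \<exists>w\<in>W. sublist w B}"
    then obtain w x y where B: "B = x @ w @ y" "w \<in> W" "admissible T B" "length B = L"
      by (auto simp: adm_words_def sublist_def)
    have a1: "admissible T x" "admissible T (w @ y)" using adm_append[of T x "w @ y"] B by simp_all
    have a2: "admissible T y" using adm_append[of T w y] a1(2) by simp
    have lx: "length x \<le> L - (k + 1)" "length y = L - (k + 1) - length x" using B W by auto
    have "B \<in> ?f w ` (adm_words T (length x) \<times> adm_words T (L - (k + 1) - length x))"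
      using B(1) a1(1) a2 lx by (intro image_eqI[of _ _ "(x, y)"]) (auto simp: adm_words_def)
    then show "B \<in> (\<Union>w\<in>W. \<Union>i\<in>{..L - (k + 1)}. ?f w ` (adm_words T i \<times> adm_words T (L - (k + 1) - i)))"
      using B(2) lx(1) by blast
  qed
  have "card {B \<in> adm_words T L. \<exists>w\<in>W. sublist w B}
      \<le> card (\<Union>w\<in>W. \<Union>i\<in>{..L - (k + 1)}. ?f w ` (adm_words T i \<times> adm_words T (L - (k + 1) - i)))"
    by (rule card_mono[OF _ sub]) (intro finite_UN_I W(2) finite_atMost finite_imageI finite_cartesian_product adm_words_finite)
  also have "\<dots> \<le> (\<Sum>w\<in>W. card (\<Union>i\<in>{..L - (k + 1)}. ?f w ` (adm_words T i \<times> adm_words T (L - (k + 1) - i))))"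
    by (rule card_UN_le[OF W(2)])
  also have "\<dots> \<le> (\<Sum>w\<in>W. \<Sum>i\<le>L - (k + 1). card (?f w ` (adm_words T i \<times> adm_words T (L - (k + 1) - i))))"
    by (intro sum_mono card_UN_le finite_atMost)
  also have "\<dots> \<le> (\<Sum>w\<in>W. \<Sum>i\<le>L - (k + 1). card (adm_words T i) * card (adm_words T (L - (k + 1) - i)))"
  proof (intro sum_mono)
    fix w i
    have "card (?f w ` (adm_words T i \<times> adm_words T (L - (k + 1) - i))) \<le> card (adm_words T i \<times> adm_words T (L - (k + 1) - i))"
      by (rule card_image_le) (intro finite_cartesian_product adm_words_finite)
    then show "card (?f w ` (adm_words T i \<times> adm_words T (L - (k + 1) - i))) \<le> card (adm_words T i) * card (adm_words T (L - (k + 1) - i))"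
      by (simp add: card_cartesian_product)
  qed
  finally show ?thesis .
qed

lemma cnt_pre:
  fixes T :: "'a::finite \<Rightarrow> 'a \<Rightarrow> real"
  assumes F: "finite F" "\<forall>v\<in>F. length v = h" and h: "h \<le> L"
  shows "card {B \<in> adm_words T L. take h B \<in> F} \<le> card F * card (adm_words T (L - h))"
proof -
  have sub: "{B \<in> adm_words T L. take h B \<in> F} \<subseteq> (\<Union>v\<in>F. (\<lambda>y. v @ y) ` adm_words T (L - h))"
  proof
    fix B assume B: "B \<in> {B \<in> adm_words T L. take h B \<in> F}"
    then have "B = take h B @ drop h B" "admissible T (drop h B)" "length (drop h B) = L - h"
      using adm_append[of T "take h B" "drop h B"] by (auto simp: adm_words_def)
    then show "B \<in> (\<Union>v\<in>F. (\<lambda>y. v @ y) ` adm_words T (L - h))"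
      using B by (auto simp: adm_words_def intro!: bexI[of _ "take h B"] image_eqI[of _ _ "drop h B"])
  qed
  have "card {B \<in> adm_words T L. take h B \<in> F} \<le> card (\<Union>v\<in>F. (\<lambda>y. v @ y) ` adm_words T (L - h))"
    by (rule card_mono[OF _ sub]) (intro finite_UN_I F(1) finite_imageI adm_words_finite)
  also have "\<dots> \<le> (\<Sum>v\<in>F. card ((\<lambda>y. v @ y) ` adm_words T (L - h)))" by (rule card_UN_le[OF F(1)])
  also have "\<dots> \<le> (\<Sum>v\<in>F. card (adm_words T (L - h)))" by (intro sum_mono card_image_le adm_words_finite)
  finally show ?thesis by simp
qed

lemma cnt_suf:
  fixes T :: "'a::finite \<Rightarrow> 'a \<Rightarrow> real"
  assumes F: "finite F" "\<forall>v\<in>F. length v = h" and h: "h \<le> L"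
  shows "card {B \<in> adm_words T L. drop (L - h) B \<in> F} \<le> card F * card (adm_words T (L - h))"
proof -
  have sub: "{B \<in> adm_words T L. drop (L - h) B \<in> F} \<subseteq> (\<Union>v\<in>F. (\<lambda>y. y @ v) ` adm_words T (L - h))"
  proof
    fix B assume B: "B \<in> {B \<in> adm_words T L. drop (L - h) B \<in> F}"
    then have "B = take (L - h) B @ drop (L - h) B" "admissible T (take (L - h) B)" "length (take (L - h) B) = L - h"
      using adm_append[of T "take (L - h) B" "drop (L - h) B"] by (auto simp: adm_words_def)
    then show "B \<in> (\<Union>v\<in>F. (\<lambda>y. y @ v) ` adm_words T (L - h))"
      using B by (auto simp: adm_words_def intro!: bexI[of _ "drop (L - h) B"] image_eqI[of _ _ "take (L - h) B"])
  qed
  have "card {B \<in> adm_words T L. drop (L - h) B \<in> F} \<le> card (\<Union>v\<in>F. (\<lambda>y. y @ v) ` adm_words T (L - h))"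
    by (rule card_mono[OF _ sub]) (intro finite_UN_I F(1) finite_imageI adm_words_finite)
  also have "\<dots> \<le> (\<Sum>v\<in>F. card ((\<lambda>y. y @ v) ` adm_words T (L - h)))" by (rule card_UN_le[OF F(1)])
  also have "\<dots> \<le> (\<Sum>v\<in>F. card (adm_words T (L - h)))" by (intro sum_mono card_image_le adm_words_finite)
  finally show ?thesis by simp
qed

lemma card_F:
  assumes W: "finite W" "\<forall>w\<in>W. length w = k + 1"
  shows "finite {v. length v = h \<and> (\<exists>w\<in>W. sublist v w)}"
    "card {v. length v = h \<and> (\<exists>w\<in>W. sublist v w)} \<le> card W * (k + 2)"
proof -
  have sub: "{v. length v = h \<and> (\<exists>w\<in>W. sublist v w)} \<subseteq> (\<Union>w\<in>W. (\<lambda>i. take h (drop i w)) ` {..k + 1})"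
  proof
    fix v assume "v \<in> {v. length v = h \<and> (\<exists>w\<in>W. sublist v w)}"
    then obtain w ps ss where v: "length v = h" "w \<in> W" "w = ps @ v @ ss" by (auto simp: sublist_def)
    then have "take h (drop (length ps) w) = v" "length ps \<le> k + 1" using W by auto
    then show "v \<in> (\<Union>w\<in>W. (\<lambda>i. take h (drop i w)) ` {..k + 1})" using v(2) by force
  qed
  show "finite {v. length v = h \<and> (\<exists>w\<in>W. sublist v w)}"
    by (rule finite_subset[OF sub]) (intro finite_UN_I W(1) finite_imageI finite_atMost)
  have "card {v. length v = h \<and> (\<exists>w\<in>W. sublist v w)} \<le> card (\<Union>w\<in>W. (\<lambda>i. take h (drop i w)) ` {..k + 1})"
    by (rule card_mono[OF _ sub]) (intro finite_UN_I W(1) finite_imageI finite_atMost)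
  also have "\<dots> \<le> (\<Sum>w\<in>W. card ((\<lambda>i. take h (drop i w)) ` {..k + 1}))" by (rule card_UN_le[OF W(1)])
  also have "\<dots> \<le> (\<Sum>w\<in>W. k + 2)"
  proof (intro sum_mono)
    fix w
    have "card ((\<lambda>i. take h (drop i w)) ` {..k + 1}) \<le> card {..k + 1}" by (rule card_image_le) simp
    then show "card ((\<lambda>i. take h (drop i w)) ` {..k + 1}) \<le> k + 2" by simp
  qed
  finally show "card {v. length v = h \<and> (\<exists>w\<in>W. sublist v w)} \<le> card W * (k + 2)" by simp
qed

lemma pigeon:
  fixes G :: "'a::finite list set"
  assumes G: "finite G"
  shows "\<exists>a b. real (card G) \<le> real (card (UNIV::'a set)) ^ 2 * real (card {B \<in> G. hd B = a \<and> last B = b})"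
proof -
  define f where "f ab = card {B \<in> G. hd B = fst ab \<and> last B = snd ab}" for ab :: "'a \<times> 'a"
  define m where "m = Max (f ` UNIV)"
  have "m \<in> f ` UNIV" unfolding m_def by (intro Max_in) auto
  then obtain ab0 where ab0: "f ab0 = m" by auto
  have le: "f ab \<le> m" for ab unfolding m_def by (intro Max_ge) auto
  have eqG: "G = (\<Union>ab\<in>UNIV. {B \<in> G. hd B = fst ab \<and> last B = snd ab})" by auto
  have "card (\<Union>ab\<in>(UNIV::('a \<times> 'a) set). {B \<in> G. hd B = fst ab \<and> last B = snd ab}) \<le> (\<Sum>ab\<in>UNIV. f ab)"
    unfolding f_def by (rule card_UN_le) simp
  then have "card G \<le> (\<Sum>ab\<in>UNIV. f ab)" using eqG by simp
  also have "\<dots> \<le> (\<Sum>ab\<in>(UNIV::('a \<times> 'a) set). m)" by (intro sum_mono le)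
  also have "\<dots> = card (UNIV::'a set) ^ 2 * m"
  proof -
    have "card (UNIV :: ('a \<times> 'a) set) = card (UNIV::'a set) * card (UNIV::'a set)"
      by (metis UNIV_Times_UNIV card_cartesian_product)
    then show ?thesis by (simp add: power2_eq_square)
  qed
  finally have "real (card G) \<le> real (card (UNIV::'a set) ^ 2 * m)" by (rule of_nat_mono)
  then show ?thesis using ab0 unfolding f_def by (intro exI[of _ "fst ab0"] exI[of _ "snd ab0"]) simp
qed

lemma trancl_word:
  assumes "(x, z) \<in> {(a, b). T b a = (1::real)}\<^sup>+"
  shows "\<exists>c. successively (\<lambda>x y. T y x = 1) (x # c @ [z])"
  using assms
proof (induction rule: trancl_induct)
  case (base y)
  then show ?case by (intro exI[of _ "[]"]) simp
next
  case (step y z)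
  then obtain c where c: "successively (\<lambda>x y. T y x = 1) (x # c @ [y])" by blast
  have "successively (\<lambda>x y. T y x = 1) ((x # c @ [y]) @ [z])"
    using c step(2) successively_append_iff[of "\<lambda>x y. T y x = 1" "x # c @ [y]" "[z]"] by simp
  then show ?case by (intro exI[of _ "c @ [y]"]) simp
qed

lemma conn_exists:
  fixes T :: "'a::finite \<Rightarrow> 'a \<Rightarrow> real"
  assumes irr: "irreducible01 T" and edge: "T y0 x0 = 1"
  shows "\<exists>m0. \<forall>a b. \<exists>c. length c \<le> m0 \<and> admissible T (b # c @ [a])"
proof -
  let ?E = "{(a, b). T b a = (1::real)}"
  have ex: "\<exists>c. admissible T (b # c @ [a])" for a b
  proof -
    have "(b, x0) \<in> ?E\<^sup>*" "(y0, a) \<in> ?E\<^sup>*" using irr unfolding irreducible01_def by auto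
    moreover have "(x0, y0) \<in> ?E" using edge by simp
    ultimately have "(b, a) \<in> ?E\<^sup>+" by (meson rtrancl_into_trancl1 trancl_rtrancl_trancl)
    then show ?thesis using trancl_word adm_succ by metis
  qed
  define cf where "cf ab = (SOME c. admissible T (snd ab # c @ [fst ab]))" for ab :: "'a \<times> 'a"
  define m0 where "m0 = Max ((\<lambda>ab. length (cf ab)) ` UNIV)"
  have "length (cf (a, b)) \<le> m0 \<and> admissible T (b # cf (a, b) @ [a])" for a b
  proof
    show "length (cf (a, b)) \<le> m0" unfolding m0_def by (intro Max_ge) auto
    show "admissible T (b # cf (a, b) @ [a])" unfolding cf_def using ex[of b a] someI_ex by simp
  qed
  then show ?thesis by blast
qed

lemma ev_from_lim:
  fixes f :: "nat \<Rightarrow> real"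
  assumes "f \<longlonglongrightarrow> 0" "e > 0"
  shows "\<exists>K. \<forall>k\<ge>K. f k \<le> e"
proof -
  have "\<forall>\<^sub>F k in sequentially. f k < e" using order_tendstoD(2)[OF assms] .
  then obtain K where "\<And>k. k \<ge> K \<Longrightarrow> f k < e" unfolding eventually_sequentially by blast
  then show ?thesis by (meson less_imp_le)
qed

lemma ev1:
  fixes l C :: real
  assumes l: "l > 1" and C: "C > 0"
  shows "\<exists>K. \<forall>k\<ge>K. 8 * C ^ 2 * (2 * real k + 3) ^ D \<le> l ^ k"
proof -
  obtain K where K: "\<And>k. k \<ge> K \<Longrightarrow> (real k + 1) ^ D / l ^ k \<le> 1 / (8 * C ^ 2 * 3 ^ D)"
    using ev_from_lim[OF poly_exp_lim[OF l, of D], of "1 / (8 * C ^ 2 * 3 ^ D)"] C by auto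
  have "8 * C ^ 2 * (2 * real k + 3) ^ D \<le> l ^ k" if k: "k \<ge> K" for k
  proof -
    have lk: "l ^ k > 0" using l by simp
    have "(2 * real k + 3) ^ D \<le> (3 * (real k + 1)) ^ D" by (intro power_mono) auto
    also have "\<dots> = 3 ^ D * (real k + 1) ^ D" by (rule power_mult_distrib)
    finally have a: "8 * C ^ 2 * (2 * real k + 3) ^ D \<le> 8 * C ^ 2 * 3 ^ D * (real k + 1) ^ D"
      using C by (simp add: mult.assoc)
    have "(real k + 1) ^ D \<le> l ^ k / (8 * C ^ 2 * 3 ^ D)"
      using K[OF k] lk C by (simp add: divide_le_eq field_simps)
    then have "8 * C ^ 2 * 3 ^ D * (real k + 1) ^ D \<le> l ^ k" using C by (simp add: field_simps)
    then show ?thesis using a by linarith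
  qed
  then show ?thesis by blast
qed

lemma ev2:
  fixes l C :: real
  assumes l: "l > 1" and C: "C > 0"
  shows "\<exists>K. \<forall>k\<ge>K. 16 * (real k + 2) * C * (2 * real k + 3) ^ d * l \<le> l ^ ((k + 1 - m0) div 2)"
proof -
  define mu where "mu = sqrt l"
  have mu1: "mu > 1" using l by (simp add: mu_def)
  have mu2: "mu ^ 2 = l" using l by (simp add: mu_def)
  define A where "A = 32 * 3 ^ d * C * l * mu ^ m0"
  have A: "A > 0" using C l mu1 by (simp add: A_def)
  obtain K where K: "\<And>k. k \<ge> K \<Longrightarrow> (real k + 1) ^ Suc d / mu ^ k \<le> 1 / A"
    using ev_from_lim[OF poly_exp_lim[OF mu1, of "Suc d"], of "1 / A"] A by auto
  have "16 * (real k + 2) * C * (2 * real k + 3) ^ d * l \<le> l ^ ((k + 1 - m0) div 2)" if k: "k \<ge> max K m0" for k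
  proof -
    have "(2 * real k + 3) ^ d \<le> (3 * (real k + 1)) ^ d" by (intro power_mono) auto
    also have "\<dots> = 3 ^ d * (real k + 1) ^ d" by (rule power_mult_distrib)
    finally have p: "(2 * real k + 3) ^ d \<le> 3 ^ d * (real k + 1) ^ d" .
    have q: "real k + 2 \<le> 2 * (real k + 1)" by simp
    have "16 * (real k + 2) * C * (2 * real k + 3) ^ d * l \<le> 16 * (2 * (real k + 1)) * C * (3 ^ d * (real k + 1) ^ d) * l"
      using p q C l by (intro mult_mono mult_right_mono) auto
    also have "\<dots> = (A / mu ^ m0) * (real k + 1) ^ Suc d"
      using mu1 by (simp add: A_def field_simps)
    also have "\<dots> \<le> mu ^ k / mu ^ m0"
    proof -
      have "(real k + 1) ^ Suc d \<le> mu ^ k / A" using K[of k] k A mu1 by (simp add: field_simps)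
      then have "A * (real k + 1) ^ Suc d \<le> mu ^ k" using A by (simp add: field_simps)
      then show ?thesis using mu1 by (simp add: divide_right_mono)
    qed
    also have "\<dots> = mu ^ (k - m0)" using k mu1 by (simp add: power_diff)
    also have "\<dots> \<le> mu ^ (2 * ((k + 1 - m0) div 2))" using mu1 by (intro power_increasing) auto
    also have "\<dots> = l ^ ((k + 1 - m0) div 2)" by (simp add: power_mult mu2)
    finally show ?thesis .
  qed
  then show ?thesis by (intro exI[of _ "max K m0"]) auto
qed

lemma ev3:
  fixes l rho X :: real
  assumes "l > rho" "rho > 1"
  shows "\<exists>K. \<forall>k\<ge>K. X \<le> (l / rho) ^ (2 * k + 2)"
proof -
  have q: "l / rho > 1" using assms by simp
  obtain n where n: "X < (l / rho) ^ n" using real_arch_pow[OF q] by blast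
  have "X \<le> (l / rho) ^ (2 * k + 2)" if "k \<ge> n" for k
  proof -
    have "(l / rho) ^ n \<le> (l / rho) ^ (2 * k + 2)" using q that by (intro power_increasing) auto
    then show ?thesis using n by linarith
  qed
  then show ?thesis by blast
qed

lemma mono_aux:
  fixes N C x x' y :: real
  assumes "N \<le> C * x * y" "x \<le> x'" "C \<ge> 0" "y \<ge> 0"
  shows "N \<le> C * x' * y"
proof -
  have "C * x * y \<le> C * x' * y" using assms by (intro mult_right_mono mult_left_mono) auto
  then show ?thesis using assms(1) by linarith
qed

lemma core:
  fixes T :: "'a::finite \<Rightarrow> 'a \<Rightarrow> real"
  assumes T01: "\<forall>x y. T x y = 0 \<or> T x y = 1"
    and rho: "1 < rho" "rho < spectral_radius UNIV T"
    and C: "C \<ge> 1"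
    and Nup: "\<And>n. real (card (adm_words T n)) \<le> C * (real n + 1) ^ d * spectral_radius UNIV T ^ n"
    and conn: "\<forall>a b. \<exists>c. length c \<le> m0 \<and> admissible T (b # c @ [a])"
    and k: "k \<ge> m0 + 2"
    and e1: "8 * C ^ 2 * (2 * real k + 3) ^ (2 * d + 1) \<le> spectral_radius UNIV T ^ k"
    and e2: "16 * (real k + 2) * C * (2 * real k + 3) ^ d * spectral_radius UNIV T
               \<le> spectral_radius UNIV T ^ ((k + 1 - m0) div 2)"
    and e3: "2 * real (card (UNIV::'a set)) ^ 2 * spectral_radius UNIV T * rho ^ m0
               \<le> (spectral_radius UNIV T / rho) ^ (2 * k + 2)"
    and w1: "w1 \<in> adm_words T (k + 1)" and w2: "w2 \<in> adm_words T (k + 1)"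
  shows "rho \<le> pf_eigenvalue (adm_words T k) (Tk_del T k {w1, w2})"
proof -
  define l where "l = spectral_radius UNIV T"
  have l1: "l > 1" using rho unfolding l_def by simp
  define L where "L = 2 * k + 2"
  define h where "h = (k + 1 - m0) div 2"
  define W where "W = {w1, w2}"
  define F where "F = {v. length v = h \<and> (\<exists>w\<in>W. sublist v w)}"
  define N where "N n = real (card (adm_words T n))" for n
  have h1: "h \<ge> 1" using k unfolding h_def by simp
  have h2: "2 * h + m0 \<le> k + 1" using k unfolding h_def by simp
  have hL: "h \<le> L" using h2 unfolding L_def by simp
  have Lk: "L \<ge> k + 1" unfolding L_def by simp
  have Wlen: "\<forall>w\<in>W. length w = k + 1" using w1 w2 unfolding W_def adm_words_def by auto
  have Wfin: "finite W" "card W \<le> 2" unfolding W_def by (auto simp: card_insert_le_m1)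
  have Ffin: "finite F" and Fcard: "card F \<le> card W * (k + 2)"
    using card_F[OF Wfin(1) Wlen, of h] unfolding F_def by auto
  have Flen: "\<forall>v\<in>F. length v = h" unfolding F_def by auto
  have Nup': "N n \<le> C * (real n + 1) ^ d * l ^ n" for n using Nup[of n] unfolding N_def l_def .
  have Nnn: "N n \<ge> 0" for n unfolding N_def by simp
  define G' where "G' = {B \<in> adm_words T L. (\<forall>w\<in>W. \<not> sublist w B) \<and> take h B \<notin> F \<and> drop (L - h) B \<notin> F}"
  define bad1 where "bad1 = {B \<in> adm_words T L. \<exists>w\<in>W. sublist w B}"
  define bad2 where "bad2 = {B \<in> adm_words T L. take h B \<in> F}"
  define bad3 where "bad3 = {B \<in> adm_words T L. drop (L - h) B \<in> F}"
  have fins: "finite G'" "finite bad1" "finite bad2" "finite bad3"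
    unfolding G'_def bad1_def bad2_def bad3_def using adm_words_finite[of T L] by auto
  have "adm_words T L \<subseteq> G' \<union> bad1 \<union> bad2 \<union> bad3"
    unfolding G'_def bad1_def bad2_def bad3_def by blast
  then have "card (adm_words T L) \<le> card (G' \<union> bad1 \<union> bad2 \<union> bad3)"
    using fins by (intro card_mono) auto
  also have "\<dots> \<le> card G' + card bad1 + card bad2 + card bad3"
    using card_Un_le[of "G' \<union> bad1 \<union> bad2" bad3] card_Un_le[of "G' \<union> bad1" bad2] card_Un_le[of G' bad1] by linarith
  finally have Nsplit: "N L \<le> real (card G') + real (card bad1) + real (card bad2) + real (card bad3)"
    unfolding N_def by linarith
  have b1nat: "card bad1 \<le> (\<Sum>w\<in>W. \<Sum>i\<le>L - (k + 1). card (adm_words T i) * card (adm_words T (L - (k + 1) - i)))"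
    unfolding bad1_def by (rule cnt_bad1[OF Wlen Wfin(1) Lk])
  have tm: "N i * N (L - (k + 1) - i) \<le> C ^ 2 * (2 * real k + 3) ^ (2 * d) * l ^ (k + 1)"
    if i: "i \<le> L - (k + 1)" for i
  proof -
    have a: "N i \<le> C * (2 * real k + 3) ^ d * l ^ i"
    proof -
      have "(real i + 1) ^ d \<le> (2 * real k + 3) ^ d" using i unfolding L_def by (intro power_mono) auto
      then show ?thesis using mono_aux[OF Nup'[of i]] C l1 by simp
    qed
    have b: "N (L - (k + 1) - i) \<le> C * (2 * real k + 3) ^ d * l ^ (L - (k + 1) - i)"
    proof -
      have "(real (L - (k + 1) - i) + 1) ^ d \<le> (2 * real k + 3) ^ d" unfolding L_def by (intro power_mono) auto
      then show ?thesis using mono_aux[OF Nup'[of "L - (k + 1) - i"]] C l1 by simp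
    qed
    have "N i * N (L - (k + 1) - i) \<le> (C * (2 * real k + 3) ^ d * l ^ i) * (C * (2 * real k + 3) ^ d * l ^ (L - (k + 1) - i))"
    proof -
      have c0: "0 \<le> C * (2 * real k + 3) ^ d * l ^ i" using C l1 by simp
      show ?thesis by (rule mult_mono[OF a b c0 Nnn])
    qed
    also have "\<dots> = C ^ 2 * (2 * real k + 3) ^ (2 * d) * (l ^ i * l ^ (L - (k + 1) - i))"
    proof -
      have p2: "(2 * real k + 3) ^ (2 * d) = (2 * real k + 3) ^ d * (2 * real k + 3) ^ d"
        by (simp only: mult_2 power_add)
      show ?thesis unfolding p2 power2_eq_square by (simp only: mult_ac)
    qed
    also have "l ^ i * l ^ (L - (k + 1) - i) = l ^ (k + 1)"
    proof -
      have e: "i + (L - (k + 1) - i) = k + 1" using i unfolding L_def by linarith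
      show ?thesis by (subst power_add[symmetric]) (simp only: e)
    qed
    finally show ?thesis .
  qed
  have b1: "real (card bad1) \<le> 2 * C ^ 2 * (2 * real k + 3) ^ (2 * d + 1) * l ^ (k + 1)"
  proof -
    have "real (card bad1) \<le> (\<Sum>w\<in>W. \<Sum>i\<le>L - (k + 1). N i * N (L - (k + 1) - i))"
    proof -
      have "real (card bad1) \<le> real (\<Sum>w\<in>W. \<Sum>i\<le>L - (k + 1). card (adm_words T i) * card (adm_words T (L - (k + 1) - i)))"
        using b1nat by (rule of_nat_mono)
      then show ?thesis unfolding N_def by simp
    qed
    also have "\<dots> \<le> (\<Sum>w\<in>W. \<Sum>i\<le>L - (k + 1). C ^ 2 * (2 * real k + 3) ^ (2 * d) * l ^ (k + 1))"
      by (intro sum_mono tm) auto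
    also have "\<dots> = real (card W) * ((real k + 2) * (C ^ 2 * (2 * real k + 3) ^ (2 * d) * l ^ (k + 1)))"
      unfolding L_def by simp
    also have "\<dots> \<le> 2 * ((2 * real k + 3) * (C ^ 2 * (2 * real k + 3) ^ (2 * d) * l ^ (k + 1)))"
    proof -
      define X where "X = C ^ 2 * (2 * real k + 3) ^ (2 * d) * l ^ (k + 1)"
      have X: "X \<ge> 0" unfolding X_def using l1 by simp
      have w2: "real (card W) \<le> 2" using Wfin(2) by simp
      have cd: "(real k + 2) * X \<le> (2 * real k + 3) * X" using X by (intro mult_right_mono) auto
      have pc: "0 \<le> (real k + 2) * X" using X by simp
      show ?thesis unfolding X_def[symmetric] by (rule mult_mono[OF w2 cd _ pc]) simp
    qed
    also have "\<dots> = 2 * C ^ 2 * (2 * real k + 3) ^ (2 * d + 1) * l ^ (k + 1)" by simp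
    finally show ?thesis .
  qed
  have b1': "real (card bad1) \<le> l ^ (2 * k + 1) / 4"
  proof -
    have "2 * C ^ 2 * (2 * real k + 3) ^ (2 * d + 1) * l ^ (k + 1) \<le> (l ^ k / 4) * l ^ (k + 1)"
      using e1 l1 unfolding l_def by (intro mult_right_mono) auto
    also have "\<dots> = l ^ (2 * k + 1) / 4"
    proof -
      have e: "2 * k + 1 = k + (k + 1)" by simp
      show ?thesis by (simp only: e power_add)
    qed
    finally show ?thesis using b1 by linarith
  qed
  have NLh: "real (card F) * N (L - h) \<le> l ^ (2 * k + 1) / 8"
  proof -
    have "card F \<le> 2 * (k + 2)" using Fcard Wfin(2) by (meson le_trans mult_le_mono1)
    then have "real (card F) \<le> real (2 * (k + 2))" by (rule of_nat_mono)
    then have cF: "real (card F) \<le> 2 * (real k + 2)" by simp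
    have "(real (L - h) + 1) ^ d \<le> (2 * real k + 3) ^ d" unfolding L_def by (intro power_mono) auto
    then have nl: "N (L - h) \<le> C * (2 * real k + 3) ^ d * l ^ (L - h)"
      using mono_aux[OF Nup'[of "L - h"]] C l1 by simp
    have "real (card F) * N (L - h) \<le> (2 * (real k + 2)) * (C * (2 * real k + 3) ^ d * l ^ (L - h))"
      using cF nl Nnn by (intro mult_mono) auto
    also have "\<dots> = (16 * (real k + 2) * C * (2 * real k + 3) ^ d * l) * l ^ (L - h) / (8 * l)"
      using l1 by (simp add: field_simps)
    also have "\<dots> \<le> l ^ h * l ^ (L - h) / (8 * l)"
      using e2 l1 unfolding l_def h_def by (intro divide_right_mono mult_right_mono) auto
    also have "\<dots> = l ^ L / (8 * l)" using hL by (simp flip: power_add)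
    also have "\<dots> = l ^ (2 * k + 1) / 8" using l1 unfolding L_def by (simp add: field_simps)
    finally show ?thesis .
  qed
  have "real (card bad2) \<le> real (card F * card (adm_words T (L - h)))"
    unfolding bad2_def by (rule of_nat_mono[OF cnt_pre[OF Ffin Flen hL]])
  then have b2: "real (card bad2) \<le> l ^ (2 * k + 1) / 8" using NLh unfolding N_def by simp
  have "real (card bad3) \<le> real (card F * card (adm_words T (L - h)))"
    unfolding bad3_def by (rule of_nat_mono[OF cnt_suf[OF Ffin Flen hL]])
  then have b3: "real (card bad3) \<le> l ^ (2 * k + 1) / 8" using NLh unfolding N_def by simp
  have NL: "l ^ (2 * k + 1) \<le> N L" using N_lower[OF T01, of "2 * k + 1"] unfolding N_def L_def l_def by simp
  have G'big: "l ^ (2 * k + 1) / 2 \<le> real (card G')" using Nsplit b1' b2 b3 NL by linarith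
  obtain a b where ab: "real (card G') \<le> real (card (UNIV::'a set)) ^ 2 * real (card {B \<in> G'. hd B = a \<and> last B = b})"
    using pigeon[OF fins(1)] by blast
  define Gab where "Gab = {B \<in> G'. hd B = a \<and> last B = b}"
  obtain c where c: "length c \<le> m0" "admissible T (b # c @ [a])" using conn by blast
  have "card (UNIV::'a set) > 0" by (simp add: card_gt_0_iff)
  then have r0: "real (card (UNIV::'a set)) > 0" by simp
  have Gbig: "rho ^ (L + length c) \<le> real (card Gab)"
  proof -
    have "rho ^ (L + length c) \<le> rho ^ (L + m0)" using rho c by (intro power_increasing) auto
    also have "\<dots> = rho ^ L * rho ^ m0" by (simp add: power_add)
    also have "\<dots> \<le> l ^ (2 * k + 1) / (2 * real (card (UNIV::'a set)) ^ 2)"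
    proof -
      have "2 * real (card (UNIV::'a set)) ^ 2 * l * rho ^ m0 * rho ^ L \<le> (l / rho) ^ L * rho ^ L"
        using e3 rho unfolding l_def L_def by (intro mult_right_mono) auto
      also have "\<dots> = l ^ L" using rho by (simp add: power_divide)
      also have "\<dots> = l * l ^ (2 * k + 1)" unfolding L_def by simp
      finally have "2 * real (card (UNIV::'a set)) ^ 2 * rho ^ m0 * rho ^ L * l \<le> l ^ (2 * k + 1) * l"
        by (simp add: algebra_simps)
      then have "2 * real (card (UNIV::'a set)) ^ 2 * (rho ^ L * rho ^ m0) \<le> l ^ (2 * k + 1)"
        using l1 by (simp add: algebra_simps)
      then show ?thesis using r0 by (simp add: field_simps)
    qed
    also have "\<dots> \<le> real (card G') / real (card (UNIV::'a set)) ^ 2"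
      using G'big r0 by (simp add: field_simps)
    also have "\<dots> \<le> real (card Gab)" using ab r0 unfolding Gab_def by (simp add: field_simps)
    finally show ?thesis .
  qed
  have Gprops: "\<forall>B\<in>Gab. length B = L \<and> (\<forall>w\<in>W. \<not> sublist w B) \<and> take h B \<notin> F \<and> drop (L - h) B \<notin> F"
    unfolding Gab_def G'_def adm_words_def by auto
  have Gadm: "\<forall>B\<in>Gab. successively (\<lambda>x y. T y x = 1) B \<and> B \<noteq> [] \<and> hd B = a \<and> last B = b"
    unfolding Gab_def G'_def adm_words_def L_def by (auto simp: adm_succ)
  have Gfin: "finite Gab" using fins(1) unfolding Gab_def by auto
  have GL: "\<forall>B\<in>Gab. length B = L" using Gprops by auto
  have hc: "2 * h + length c \<le> k + 1" using h2 c by simp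
  define S where "S = adm_words T k"
  define M where "M = Tk_del T k W"
  have Sfin: "finite S" unfolding S_def by (rule adm_words_finite)
  have k1: "k \<ge> 1" using k by simp
  have M01: "\<forall>x\<in>S. \<forall>y\<in>S. M x y = 0 \<or> M x y = 1"
    unfolding S_def M_def W_def using Tkdel01[OF k1 w1 w2] by blast
  define f where "f j = j * (L + length c) - k" for j
  have "rho \<le> spectral_radius S M"
  proof (rule srlow[OF Sfin rho(1) _ Gbig])
    show "0 < L + length c" unfolding L_def by simp
    show "f j \<le> j * (L + length c)" for j unfolding f_def by simp
    fix j :: nat assume j: "j \<ge> 1"
    define Lj where "Lj = {Bs. set Bs \<subseteq> Gab \<and> length Bs = j}"
    have cardLj: "card Lj = card Gab ^ j" unfolding Lj_def by (rule card_lists_length_eq[OF Gfin])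
    have injcat: "inj_on (cat c) Lj" unfolding Lj_def
      by (intro inj_onI) (rule cat_inj[OF GL], auto)
    have lenw: "length s = f j + k" if s: "s \<in> cat c ` Lj" for s
    proof -
      obtain Bs where Bs: "s = cat c Bs" "set Bs \<subseteq> Gab" "length Bs = j" using s unfolding Lj_def by auto
      have "length s = j * (L + length c)" using cat_len[OF GL Bs(2)] Bs by simp
      moreover have "j * (L + length c) \<ge> k"
      proof -
        have "1 * (L + length c) \<le> j * (L + length c)" using j by (intro mult_le_mono1)
        then have "L + length c \<le> j * (L + length c)" by (simp only: mult_1)
        moreover have "k \<le> L" unfolding L_def by simp
        ultimately show ?thesis by linarith
      qed
      ultimately show ?thesis unfolding f_def by simp
    qed
    have inpaths: "win k (f j) s \<in> paths S M (f j)" if s: "s \<in> cat c ` Lj" for s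
    proof -
      obtain Bs where Bs: "s = cat c Bs" "set Bs \<subseteq> Gab" using s unfolding Lj_def by auto
      have adm: "admissible T s" using cat_adm[OF c(2)[unfolded adm_succ] Gadm Bs(2)] Bs(1) by (simp add: adm_succ)
      have av: "\<forall>w\<in>W. length w = k + 1 \<and> \<not> sublist w s"
        using cat_avoid[OF Wlen hc h1 hL Gprops F_def _ Bs(2)] Wlen Bs(1) by blast
      show ?thesis unfolding S_def M_def using win_paths[OF k1 lenw[OF s] adm av] .
    qed
    have injwin: "inj_on (win k (f j)) (cat c ` Lj)"
      by (rule inj_on_subset[OF win_inj[OF k1]]) (use lenw in auto)
    have "real (card Gab) ^ j = real (card (cat c ` Lj))"
      using cardLj card_image[OF injcat] by simp
    also have "\<dots> = real (card (win k (f j) ` cat c ` Lj))" using card_image[OF injwin] by simp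
    also have "\<dots> \<le> real (card (paths S M (f j)))"
      using inpaths paths_finite[OF Sfin] by (intro of_nat_mono card_mono) auto
    also have "\<dots> = (\<Sum>a\<in>S. \<Sum>b\<in>S. mpow S M (f j) a b)" using paths_card_sum[OF Sfin M01] by simp
    finally show "real (card Gab) ^ j \<le> (\<Sum>a\<in>S. \<Sum>b\<in>S. mpow S M (f j) a b)" .
  qed
  then show ?thesis unfolding pf_eigenvalue_def S_def M_def W_def .
qed

theorem proposition5p2:
  fixes T :: "'a::finite \<Rightarrow> 'a \<Rightarrow> real" and \<rho> :: real
  assumes "\<forall>x y. T x y = 0 \<or> T x y = 1"
    and "irreducible01 T"
    and "\<rho> > 1"
    and "\<rho> < spectral_radius UNIV T"
    and "\<forall>lam. is_eigenvalue UNIV T lam \<and> cmod lam \<noteq> spectral_radius UNIV T \<longrightarrow> cmod lam < \<rho>"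
  shows "\<exists>K::nat. \<forall>k\<ge>K. \<forall>w1 w2. w1 \<in> adm_words T (k + 1) \<longrightarrow> w2 \<in> adm_words T (k + 1) \<longrightarrow>
           pf_eigenvalue (adm_words T k) (Tk_del T k {w1, w2}) \<ge> \<rho>"
proof -
  note T01 = assms(1)
  define l where "l = spectral_radius UNIV T"
  have l1: "l > 1" using assms(3,4) unfolding l_def by simp
  have lpos: "spectral_radius UNIV T > 0" using l1 unfolding l_def by simp
  obtain C where C: "C \<ge> 1"
    and Nup: "\<And>n. real (card (adm_words T n)) \<le> C * (real n + 1) ^ card (UNIV::'a set) * spectral_radius UNIV T ^ n"
    using N_upper[OF T01 lpos] by blast
  have Cpos: "C > 0" using C by simp
  have "spectral_radius UNIV T ^ 1 \<le> real (card (adm_words T (Suc 1)))" by (rule N_lower[OF T01])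
  then have "card (adm_words T (Suc 1)) > 0" using lpos by (metis of_nat_0_less_iff order_less_le_trans power_one_right)
  then obtain w where w: "w \<in> adm_words T (Suc 1)" by (metis card.empty ex_in_conv less_irrefl)
  then have "T (w ! 1) (w ! 0) = 1" unfolding adm_words_def admissible_def by auto
  from conn_exists[OF assms(2) this] obtain m0 where conn: "\<forall>a b. \<exists>c. length c \<le> m0 \<and> admissible T (b # c @ [a])"
    by blast
  let ?d = "card (UNIV::'a set)"
  obtain K1 where K1: "\<And>k. k \<ge> K1 \<Longrightarrow> 8 * C ^ 2 * (2 * real k + 3) ^ (2 * ?d + 1) \<le> l ^ k"
    using ev1[OF l1 Cpos, of "2 * ?d + 1"] by blast
  obtain K2 where K2: "\<And>k. k \<ge> K2 \<Longrightarrow> 16 * (real k + 2) * C * (2 * real k + 3) ^ ?d * l \<le> l ^ ((k + 1 - m0) div 2)"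
    using ev2[OF l1 Cpos, of ?d m0] by blast
  obtain K3 where K3: "\<And>k. k \<ge> K3 \<Longrightarrow> 2 * real ?d ^ 2 * l * \<rho> ^ m0 \<le> (l / \<rho>) ^ (2 * k + 2)"
    using ev3[of \<rho> l "2 * real ?d ^ 2 * l * \<rho> ^ m0"] assms(3,4) unfolding l_def by blast
  define K where "K = max (m0 + 2) (max K1 (max K2 K3))"
  show ?thesis
  proof (intro exI[of _ K] allI impI)
    fix k w1 w2 assume k: "k \<ge> K" and w1: "w1 \<in> adm_words T (k + 1)" and w2: "w2 \<in> adm_words T (k + 1)"
    show "\<rho> \<le> pf_eigenvalue (adm_words T k) (Tk_del T k {w1, w2})"
    proof (rule core[OF T01 assms(3,4) C Nup conn _ _ _ _ w1 w2])
      show "m0 + 2 \<le> k" using k unfolding K_def by simp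
      show "8 * C ^ 2 * (2 * real k + 3) ^ (2 * ?d + 1) \<le> spectral_radius UNIV T ^ k"
        using K1[of k] k unfolding K_def l_def by simp
      show "16 * (real k + 2) * C * (2 * real k + 3) ^ ?d * spectral_radius UNIV T
               \<le> spectral_radius UNIV T ^ ((k + 1 - m0) div 2)"
        using K2[of k] k unfolding K_def l_def by simp
      show "2 * real ?d ^ 2 * spectral_radius UNIV T * \<rho> ^ m0 \<le> (spectral_radius UNIV T / \<rho>) ^ (2 * k + 2)"
        using K3[of k] k unfolding K_def l_def by simp
    qed
  qed
qed

end
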